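(* In the setting described in the context, let $\kappa_1>0$ be the smallest eigenvalue of $\Gamma^{1/2}$, let $b_1>0$ be the smallest eigenvalue of $\Gamma^{-1/2}A\Gamma^{-1/2}$, and set $C_0:=m^2\rho^{-1}\max\{\Phi,1,2\Delta/(\kappa_1^2 b_1)\}$. Then there exist constants $K_0,K_1>0$, independent of $B,\varepsilon,\zeta,k,\nu$, such that for every $B\in(0,C_0)$ there exist $\bar\varepsilon>0$ and $\bar\zeta>0$ with the following property: for all real $\varepsilon$ with $|\varepsilon|<\bar\varepsilon$, all $\zeta\in\mathbb{R}^m$ with $|\zeta|<\bar\zeta$, all $k\ge1$ and all $\nu\in\mathbb{Z}^d\setminus\{0\}$, $$|u^{(k)}_\nu|\le B_0B_1^k e^{-\xi|\nu|/2},\qquad B_0:=K_0B,\quad B_1:=K_1B.$$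
   Context: Setting: $m,d\ge1$; $\omega\in\mathbb{R}^d$ has rationally independent components ($\omega\cdot\nu\neq0$ for all $\nu\in\mathbb{Z}^d\setminus\{0\}$); $\Gamma$ is a real symmetric positive definite $m\times m$ matrix; $V:\mathbb{R}^m\to\mathbb{R}$ is real analytic and $g=\partial V/\partial x$; $f:\mathbb{T}^d\to\mathbb{R}^m$ is real analytic with Fourier coefficients $f_\nu$. The point $c\in\mathbb{R}^m$ satisfies $g(c)=f_0$ and the Hessian $A:=\frac{\partial^2V}{\partial x^2}(c)$ is positive definite. Constants $\xi>0,\Phi>0$ satisfy $|(f_\nu)_i|\le\Phi e^{-\xi|\nu|}$ for all $\nu\in\mathbb{Z}^d$, $i=1,\dots,m$. For $p\ge0$, $G_p(c)$ is the tensor with components $[G_p(c)]_{i,i_1,\dots,i_p}=\frac1{p!}\frac{\partial^pg_i}{\partial x_{i_1}\cdots\partial x_{i_p}}(c)$, and constants $\rho>0,\Delta>0$ satisfy $|[G_p(c)]_{i,i_1,\dots,i_p}|\le\Delta\rho^{-p}$ for all $p,i,i_1,\dots,i_p$. For vectors $y_1,\dots,y_p\in\mathbb{C}^m$, $G_p(c)y_1\cdots y_p$ denotes the vector with components $\sum_{i_1,\dots,i_p}[G_p(c)]_{i,i_1,\dots,i_p}(y_1)_{i_1}\cdots(y_p)_{i_p}$. For $\varepsilon,s\in\mathbb{R}$ let $D(\varepsilon,s):=-\varepsilon s^2\mathbb{1}+is\Gamma+\varepsilon A$. For $\zeta\in\mathbb{R}^m$ and real $\varepsilon$, the vectors $u^{(k)}_\nu\in\mathbb{C}^m$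 ($k\ge1$, $\nu\in\mathbb{Z}^d$) are defined recursively by $u^{(1)}_0=\zeta$, $u^{(k)}_0=0$ for $k\ge2$, and for $\nu\ne0$: $D(\varepsilon,\omega\cdot\nu)u^{(1)}_\nu=\varepsilon f_\nu$ and, for $k\ge2$, $$D(\varepsilon,\omega\cdot\nu)u^{(k)}_\nu=-\varepsilon\sum_{p\ge2}\ \sum_{\substack{k_1,\dots,k_p\ge1\\k_1+\dots+k_p=k-1}}\ \sum_{\substack{\nu_1,\dots,\nu_p\in\mathbb{Z}^d\\\nu_1+\dots+\nu_p=\nu}}G_p(c)u^{(k_1)}_{\nu_1}\cdots u^{(k_p)}_{\nu_p}$$ (empty sums are zero). $|\cdot|$ denotes the Euclidean norm on $\mathbb{C}^m$ and on $\mathbb{Z}^d$ as appropriate. *)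

theory Defs
  imports "HOL-Analysis.Analysis" "HOL-Library.Multiset"
begin

text \<open>Vectors of R^m / C^m are indexed by a finite type 'm (m = CARD('m)),
  lattice vectors nu in Z^d are int^'d (d = CARD('d)).\<close>

definition dotZ :: "real^'d \<Rightarrow> int^'d \<Rightarrow> real" where
  "dotZ \<omega> \<nu> = (\<Sum>i\<in>UNIV. \<omega>$i * real_of_int (\<nu>$i))"

definition normZ :: "int^'d \<Rightarrow> real" where
  "normZ \<nu> = norm ((\<chi> i. real_of_int (\<nu>$i)) :: real^'d)"

definition pos_def_mat :: "real^'m^'m \<Rightarrow> bool" where
  "pos_def_mat M \<longleftrightarrow> transpose M = M \<and> (\<forall>v. v \<noteq> 0 \<longrightarrow> v \<bullet> (M *v v) > 0)"

definition matrix_sqrt :: "real^'m^'m \<Rightarrow> real^'m^'m" where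
  "matrix_sqrt M = (THE S. pos_def_mat S \<and> S ** S = M)"

definition min_eig :: "real^'m^'m \<Rightarrow> real" where
  "min_eig M = Inf {e. \<exists>v::real^'m. v \<noteq> 0 \<and> M *v v = e *\<^sub>R v}"

definition Dmat :: "real^'m^'m \<Rightarrow> real^'m^'m \<Rightarrow> real \<Rightarrow> real \<Rightarrow> complex^'m^'m" where
  "Dmat \<Gamma> A \<epsilon> s = (\<chi> i j. complex_of_real (- \<epsilon> * s^2 * (if i = j then 1 else 0) + \<epsilon> * A$i$j)
                         + \<i> * complex_of_real (s * \<Gamma>$i$j))"

text \<open>The tensor G_p(c) is encoded by G :: 'm => 'm list => real:
  [G_p(c)]_{i,i_1,...,i_p} = G i [i_1,...,i_p]  (lists of length p).
  Gapply G p ys is the vector G_p(c) y_0 ... y_(p-1).\<close>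
definition Gapply :: "('m \<Rightarrow> 'm list \<Rightarrow> real) \<Rightarrow> nat \<Rightarrow> (nat \<Rightarrow> complex^'m) \<Rightarrow> complex^'m" where
  "Gapply G p ys = (\<chi> i. \<Sum>xs\<in>{xs. length xs = p}.
      complex_of_real (G i xs) * (\<Prod>j<p. ys j $ (xs ! j)))"

definition comps :: "nat \<Rightarrow> nat \<Rightarrow> (nat \<Rightarrow> nat) set" where
  "comps p n = {ks. ks \<in> PiE {..<p} (\<lambda>_. {1..}) \<and> (\<Sum>j<p. ks j) = n}"

definition splits :: "nat \<Rightarrow> int^'d \<Rightarrow> (nat \<Rightarrow> int^'d) set" where
  "splits p \<nu> = {\<nu>s. \<nu>s \<in> PiE {..<p} (\<lambda>_. UNIV) \<and> (\<Sum>j<p. \<nu>s j) = \<nu>}"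

text \<open>One step of the recursion: computes u^(k)_nu from the previously
  computed u^(k') (k' < k), given as h.\<close>
definition ustep ::
  "real^'m^'m \<Rightarrow> real^'m^'m \<Rightarrow> real^'d \<Rightarrow> (int^'d \<Rightarrow> complex^'m) \<Rightarrow> ('m \<Rightarrow> 'm list \<Rightarrow> real)
   \<Rightarrow> real \<Rightarrow> real^'m \<Rightarrow> (nat \<Rightarrow> int^'d \<Rightarrow> complex^'m) \<Rightarrow> nat \<Rightarrow> int^'d \<Rightarrow> complex^'m" where
  "ustep \<Gamma> A \<omega> f G \<epsilon> \<zeta> h k \<nu> =
     (if \<nu> = 0 then (if k = 1 then (\<chi> i. complex_of_real (\<zeta>$i)) else 0)
      else matrix_inv (Dmat \<Gamma> A \<epsilon> (dotZ \<omega> \<nu>)) *v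
        (if k = 1 then complex_of_real \<epsilon> *s f \<nu>
         else (- complex_of_real \<epsilon>) *s
           (\<Sum>p\<in>{2..k-1}. \<Sum>ks\<in>comps p (k-1).
               infsum (\<lambda>\<nu>s. Gapply G p (\<lambda>j. h (ks j) (\<nu>s j))) (splits p \<nu>))))"

primrec uhist ::
  "real^'m^'m \<Rightarrow> real^'m^'m \<Rightarrow> real^'d \<Rightarrow> (int^'d \<Rightarrow> complex^'m) \<Rightarrow> ('m \<Rightarrow> 'm list \<Rightarrow> real)
   \<Rightarrow> real \<Rightarrow> real^'m \<Rightarrow> nat \<Rightarrow> nat \<Rightarrow> int^'d \<Rightarrow> complex^'m" where
  "uhist \<Gamma> A \<omega> f G \<epsilon> \<zeta> 0 = (\<lambda>_ _. 0)"
| "uhist \<Gamma> A \<omega> f G \<epsilon> \<zeta> (Suc n) =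
     (uhist \<Gamma> A \<omega> f G \<epsilon> \<zeta> n)(Suc n := ustep \<Gamma> A \<omega> f G \<epsilon> \<zeta> (uhist \<Gamma> A \<omega> f G \<epsilon> \<zeta> n) (Suc n))"

text \<open>u^(k)_nu (for k >= 1).\<close>
definition useq ::
  "real^'m^'m \<Rightarrow> real^'m^'m \<Rightarrow> real^'d \<Rightarrow> (int^'d \<Rightarrow> complex^'m) \<Rightarrow> ('m \<Rightarrow> 'm list \<Rightarrow> real)
   \<Rightarrow> real \<Rightarrow> real^'m \<Rightarrow> nat \<Rightarrow> int^'d \<Rightarrow> complex^'m" where
  "useq \<Gamma> A \<omega> f G \<epsilon> \<zeta> k = uhist \<Gamma> A \<omega> f G \<epsilon> \<zeta> k k"

end

theory Submission
  imports Defs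
begin


lemma prod_PiE_summable_nonneg:
  fixes f :: "'a \<Rightarrow> 'b \<Rightarrow> real"
  assumes "finite A" "\<And>x. x \<in> A \<Longrightarrow> f x summable_on B x" "\<And>x y. f x y \<ge> 0"
  shows "(\<lambda>g. \<Prod>x\<in>A. f x (g x)) summable_on PiE A B"
  using assms(1,2)
proof (induction A rule: finite_induct)
  case empty
  then show ?case by simp
next
  case (insert x A)
  have pi: "PiE (insert x A) B = (\<lambda>(g,y). g(x:=y)) ` (PiE A B \<times> B x)"
    unfolding PiE_insert_eq
    by (subst swap_product [symmetric]) (simp add: image_image case_prod_unfold)
  have inj: "inj_on (\<lambda>(g, y). g(x := y)) (PiE A B \<times> B x)"
    using \<open>x \<notin> A\<close> by (rule inj_combinator')
  have prod: "(\<Prod>x'\<in>A. f x' ((p(x:=y)) x')) = (\<Prod>x'\<in>A. f x' (p x'))" for p y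
    by (rule prod.cong) (use insert.hyps in auto)
  have eq: "((\<lambda>g. \<Prod>x\<in>insert x A. f x (g x)) \<circ> (\<lambda>(g,y). g(x:=y))) =
             (\<lambda>(p, y). f x y * (\<Prod>x'\<in>A. f x' (p x')))"
  proof -
    have "(\<Prod>x'\<in>insert x A. f x' ((p(x:=y)) x')) = f x y * (\<Prod>x'\<in>A. f x' (p x'))" for p y
      using insert.hyps by (simp add: prod del: fun_upd_apply) (simp add: fun_upd_same)
    then show ?thesis by (simp add: fun_eq_iff case_prod_unfold o_def del: fun_upd_apply)
  qed
  have IH: "(\<lambda>g. \<Prod>x\<in>A. f x (g x)) summable_on PiE A B" using insert by auto
  have fx: "f x summable_on B x" using insert by auto
  have "(\<lambda>(p, y). f x y * (\<Prod>x'\<in>A. f x' (p x'))) summable_on Sigma (PiE A B) (\<lambda>_. B x)"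
  proof (rule summable_on_SigmaI[where g="\<lambda>p. infsum (f x) (B x) * (\<Prod>x'\<in>A. f x' (p x'))"])
    fix p assume "p \<in> PiE A B"
    show "((\<lambda>y. case (p, y) of (p, y) \<Rightarrow> f x y * (\<Prod>x'\<in>A. f x' (p x'))) has_sum
          infsum (f x) (B x) * (\<Prod>x'\<in>A. f x' (p x'))) (B x)"
      using has_sum_cmult_left[OF has_sum_infsum[OF fx]] by simp
  next
    show "(\<lambda>p. infsum (f x) (B x) * (\<Prod>x'\<in>A. f x' (p x'))) summable_on PiE A B"
      using IH by (rule summable_on_cmult_right)
  next
    fix p y show "0 \<le> (case (p, y) of (p, y) \<Rightarrow> f x y * (\<Prod>x'\<in>A. f x' (p x')))"
      using assms(3) by (simp add: prod_nonneg)
  qed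
  then have "((\<lambda>g. \<Prod>x\<in>insert x A. f x (g x)) \<circ> (\<lambda>(g,y). g(x:=y))) summable_on (PiE A B \<times> B x)"
    by (simp add: eq)
  then show ?case
    unfolding pi using inj by (subst summable_on_reindex) auto
qed

lemma exp_nat_summable:
  assumes "c > 0"
  shows "(\<lambda>n::nat. exp (- c * real n)) summable_on UNIV"
proof -
  have "summable (\<lambda>n::nat. exp (- c) ^ n)"
    by (rule summable_geometric) (use assms in simp)
  moreover have "exp (- c) ^ n = exp (- c * real n)" for n
    by (simp add: exp_of_nat_mult[symmetric] mult.commute)
  ultimately have "summable (\<lambda>n::nat. exp (- c * real n))" by simp
  then show ?thesis
    by (subst summable_on_UNIV_nonneg_real_iff) auto
qed

lemma exp_int_summable:
  assumes "c > 0"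
  shows "(\<lambda>n::int. exp (- c * \<bar>real_of_int n\<bar>)) summable_on UNIV"
proof -
  have U: "(UNIV::int set) = range int \<union> range (\<lambda>n. - int n - 1)"
  proof -
    have "x \<in> range int \<union> range (\<lambda>n. - int n - 1)" for x :: int
    proof (cases "x \<ge> 0")
      case True then show ?thesis by (auto intro!: image_eqI[of _ _ "nat x"])
    next
      case False then show ?thesis by (auto intro!: image_eqI[of _ _ "nat (- x - 1)"])
    qed
    then show ?thesis by auto
  qed
  have s1: "(\<lambda>n::int. exp (- c * \<bar>real_of_int n\<bar>)) summable_on range int"
    by (subst summable_on_reindex) (use exp_nat_summable[OF assms] in \<open>auto simp: o_def\<close>)
  have s2: "(\<lambda>n::int. exp (- c * \<bar>real_of_int n\<bar>)) summable_on range (\<lambda>n. - int n - 1)"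
  proof (subst summable_on_reindex)
    show "inj (\<lambda>n. - int n - 1)" by (auto simp: inj_def)
    have "(\<lambda>n::nat. exp (-c) * exp (- c * real n)) summable_on UNIV"
      by (rule summable_on_cmult_right) (rule exp_nat_summable[OF assms])
    moreover have "exp (- c * \<bar>real_of_int (- int n - 1)\<bar>) = exp (-c) * exp (- c * real n)" for n
      by (simp add: exp_add[symmetric] algebra_simps)
    ultimately show "((\<lambda>n::int. exp (- c * \<bar>real_of_int n\<bar>)) \<circ> (\<lambda>n. - int n - 1)) summable_on UNIV"
      by (simp add: o_def)
  qed
  have "(\<lambda>n::int. exp (- c * \<bar>real_of_int n\<bar>)) summable_on (range int \<union> range (\<lambda>n. - int n - 1))"
    by (rule summable_on_union[OF s1 s2])
  then show ?thesis using U by simp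
qed

lemma normZ_ge_comp: fixes \<nu> :: "int^'d" shows "\<bar>real_of_int (\<nu> $ i)\<bar> \<le> normZ \<nu>"
  unfolding normZ_def using component_le_norm_cart[of "(\<chi> i. real_of_int (\<nu>$i)) :: real^'d" i] by simp

lemma normZ_nonneg: "normZ \<nu> \<ge> 0" unfolding normZ_def by simp

lemma lattice_summable:
  assumes "b > 0"
  shows "(\<lambda>\<nu>::int^'d. exp (- b * normZ \<nu>)) summable_on UNIV"
proof -
  define c where "c = b / real CARD('d)"
  have c: "c > 0" using assms by (simp add: c_def)
  define h where "h = (\<lambda>n::int. exp (- c * \<bar>real_of_int n\<bar>))"
  have "(\<lambda>g::'d \<Rightarrow> int. \<Prod>i\<in>UNIV. h (g i)) summable_on PiE UNIV (\<lambda>_. UNIV)"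
    by (rule prod_PiE_summable_nonneg) (use exp_int_summable[OF c] in \<open>auto simp: h_def\<close>)
  then have "(\<lambda>g::'d \<Rightarrow> int. \<Prod>i\<in>UNIV. h (g i)) summable_on UNIV" by simp
  then have "((\<lambda>\<nu>::int^'d. \<Prod>i\<in>UNIV. h (\<nu> $ i)) \<circ> vec_lambda) summable_on UNIV"
    by (simp add: o_def)
  then have S: "(\<lambda>\<nu>::int^'d. \<Prod>i\<in>UNIV. h (\<nu> $ i)) summable_on range vec_lambda"
    by (subst summable_on_reindex) (auto simp: inj_def vec_lambda_inject)
  have "range (vec_lambda :: ('d \<Rightarrow> int) \<Rightarrow> int^'d) = UNIV"
    by (metis surj_def vec_nth_inverse)
  with S have S': "(\<lambda>\<nu>::int^'d. \<Prod>i\<in>UNIV. h (\<nu> $ i)) summable_on UNIV" by simp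
  show ?thesis
  proof (rule summable_on_comparison_test[OF S'])
    fix \<nu> :: "int^'d"
    have "(\<Sum>i\<in>UNIV. \<bar>real_of_int (\<nu> $ i)\<bar>) \<le> (\<Sum>i\<in>(UNIV::'d set). normZ \<nu>)"
      by (rule sum_mono) (rule normZ_ge_comp)
    then have "c * (\<Sum>i\<in>UNIV. \<bar>real_of_int (\<nu> $ i)\<bar>) \<le> b * normZ \<nu>"
      using c by (simp add: c_def field_simps mult_left_mono)
    then have "exp (- b * normZ \<nu>) \<le> exp (- (c * (\<Sum>i\<in>UNIV. \<bar>real_of_int (\<nu> $ i)\<bar>)))"
      by simp
    also have "\<dots> = (\<Prod>i\<in>UNIV. h (\<nu> $ i))"
      by (simp add: h_def exp_sum[symmetric] sum_distrib_left sum_negf)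
    finally show "exp (- b * normZ \<nu>) \<le> (\<Prod>i\<in>UNIV. h (\<nu> $ i))" .
  qed simp
qed



lemma has_sum_sum_fin:
  fixes f :: "'i \<Rightarrow> 'a \<Rightarrow> 'b::{topological_comm_monoid_add}"
  assumes "finite I" "\<And>i. i \<in> I \<Longrightarrow> (f i has_sum s i) A"
  shows "((\<lambda>x. \<Sum>i\<in>I. f i x) has_sum (\<Sum>i\<in>I. s i)) A"
  using assms by (induction I rule: finite_induct) (auto intro!: has_sum_add)

lemma summable_sum_fin:
  fixes f :: "'i \<Rightarrow> 'a \<Rightarrow> 'b::{topological_comm_monoid_add,t2_space}"
  assumes "finite I" "\<And>i. i \<in> I \<Longrightarrow> f i summable_on A"
  shows "(\<lambda>x. \<Sum>i\<in>I. f i x) summable_on A"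
    and "infsum (\<lambda>x. \<Sum>i\<in>I. f i x) A = (\<Sum>i\<in>I. infsum (f i) A)"
proof -
  have "((\<lambda>x. \<Sum>i\<in>I. f i x) has_sum (\<Sum>i\<in>I. infsum (f i) A)) A"
    by (rule has_sum_sum_fin) (use assms in auto)
  then show "(\<lambda>x. \<Sum>i\<in>I. f i x) summable_on A"
    and "infsum (\<lambda>x. \<Sum>i\<in>I. f i x) A = (\<Sum>i\<in>I. infsum (f i) A)"
    by (auto simp: has_sum_iff)
qed

lemma splits_sub: "splits p \<nu> \<subseteq> PiE {..<p} (\<lambda>_. UNIV)"
  by (auto simp: splits_def)

lemma conv_sum:
  fixes g :: "nat \<Rightarrow> int^'d \<Rightarrow> real"
  assumes sg: "\<And>j. j < p \<Longrightarrow> g j summable_on UNIV" and g0: "\<And>j \<mu>. g j \<mu> \<ge> 0"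
  shows "(\<lambda>\<nu>s. \<Prod>j<p. g j (\<nu>s j)) summable_on splits p \<nu>"
    and "(\<lambda>\<nu>. infsum (\<lambda>\<nu>s. \<Prod>j<p. g j (\<nu>s j)) (splits p \<nu>)) summable_on UNIV"
    and "infsum (\<lambda>\<nu>. infsum (\<lambda>\<nu>s. \<Prod>j<p. g j (\<nu>s j)) (splits p \<nu>)) UNIV = (\<Prod>j<p. infsum (g j) UNIV)"
proof -
  define F where "F = (\<lambda>\<nu>s. \<Prod>j<p. g j (\<nu>s j))"
  have SP: "F summable_on PiE {..<p} (\<lambda>_. UNIV)"
    unfolding F_def by (rule prod_PiE_summable_nonneg) (use sg g0 in auto)
  then show "(\<lambda>\<nu>s. \<Prod>j<p. g j (\<nu>s j)) summable_on splits p \<nu>"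
    unfolding F_def by (rule summable_on_subset_banach) (rule splits_sub)
  have inj: "inj_on snd (Sigma (UNIV::(int^'d) set) (splits p))"
    by (auto simp: inj_on_def splits_def)
  have img: "snd ` (Sigma (UNIV::(int^'d) set) (splits p)) = PiE {..<p} (\<lambda>_. UNIV)"
    by (auto simp: splits_def image_iff)
  have SS: "(\<lambda>(\<nu>::int^'d, \<nu>s). F \<nu>s) summable_on Sigma UNIV (splits p)"
  proof -
    have "(F \<circ> snd) summable_on Sigma UNIV (splits p)"
      using summable_on_reindex[OF inj, of F] SP img by simp
    then show ?thesis by (simp add: o_def case_prod_unfold)
  qed
  show "(\<lambda>\<nu>. infsum (\<lambda>\<nu>s. \<Prod>j<p. g j (\<nu>s j)) (splits p \<nu>)) summable_on UNIV"
    using summable_on_Sigma_banach[of "\<lambda>\<nu> \<nu>s. F \<nu>s", OF SS] unfolding F_def by simp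
  have "infsum (\<lambda>\<nu>. infsum F (splits p \<nu>)) UNIV = infsum (\<lambda>(\<nu>::int^'d, \<nu>s). F \<nu>s) (Sigma UNIV (splits p))"
    using infsum_Sigma'_banach[of "\<lambda>\<nu> \<nu>s. F \<nu>s", OF SS] by simp
  also have "\<dots> = infsum (F \<circ> snd) (Sigma UNIV (splits p))"
    by (simp add: o_def case_prod_unfold)
  also have "\<dots> = infsum F (PiE {..<p} (\<lambda>_. UNIV))"
    using inj img by (subst infsum_reindex[symmetric]) auto
  also have "\<dots> = (\<Prod>j<p. infsum (g j) UNIV)"
    unfolding F_def by (rule infsum_prod_PiE) (use sg SP[unfolded F_def] in auto)
  finally show "infsum (\<lambda>\<nu>. infsum (\<lambda>\<nu>s. \<Prod>j<p. g j (\<nu>s j)) (splits p \<nu>)) UNIV = (\<Prod>j<p. infsum (g j) UNIV)"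
    unfolding F_def .
qed



lemma comps_sub: "comps p n \<subseteq> PiE {..<p} (\<lambda>_. {1..n})"
proof
  fix ks assume ks: "ks \<in> comps p n"
  have "ks j \<le> n" if "j < p" for j
  proof -
    have "ks j \<le> (\<Sum>j<p. ks j)" using that by (intro member_le_sum) auto
    then show ?thesis using ks by (simp add: comps_def)
  qed
  then show "ks \<in> PiE {..<p} (\<lambda>_. {1..n})" using ks by (auto simp: comps_def PiE_def Pi_def)
qed

lemma finite_comps: "finite (comps p n)"
  by (rule finite_subset[OF comps_sub]) (simp add: finite_PiE)

lemma comps_range: "ks \<in> comps p n \<Longrightarrow> j < p \<Longrightarrow> 1 \<le> ks j \<and> ks j \<le> n"
  using comps_sub by (auto simp: PiE_def Pi_def)

lemma inv_sq_sum: "(\<Sum>a\<in>{1..n}. 1 / real a ^ 2) \<le> 2 - 1 / real n"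
  if "n \<ge> 1" for n :: nat
  using that
proof (induction n rule: dec_induct)
  case base then show ?case by simp
next
  case (step n)
  have "(\<Sum>a\<in>{1..Suc n}. 1 / real a ^ 2) = (\<Sum>a\<in>{1..n}. 1 / real a ^ 2) + 1 / real (Suc n) ^ 2"
    by simp
  also have "\<dots> \<le> 2 - 1 / real n + 1 / real (Suc n) ^ 2" using step by simp
  also have "\<dots> \<le> 2 - 1 / real (Suc n)"
  proof -
    have "1 / real (Suc n) ^ 2 \<le> 1 / (real n * real (Suc n))"
      by (rule divide_left_mono) (use step(1) in \<open>auto simp: power2_eq_square intro!: mult_right_mono mult_pos_pos\<close>)
    also have "\<dots> = 1 / real n - 1 / real (Suc n)" using step(1) by (simp add: field_simps)
    finally have "1 / real (Suc n) ^ 2 \<le> 1 / real n - 1 / real (Suc n)" .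
    then show ?thesis by simp
  qed
  finally show ?case .
qed

lemma inv_sq_sum2: "(\<Sum>a\<in>{1..n}. 1 / real a ^ 2) \<le> 2"
proof (cases "n \<ge> 1")
  case True then show ?thesis using inv_sq_sum[OF True] by (smt (verit) of_nat_0_le_iff divide_nonneg_nonneg)
qed simp

lemma comps_sq_bound:
  assumes "p \<ge> 1" "n \<ge> 1"
  shows "(\<Sum>ks\<in>comps p n. \<Prod>j<p. 1 / real (ks j) ^ 2) \<le> 8 ^ p / real n ^ 2"
proof -
  define g where "g = (\<lambda>a::nat. 1 / real a ^ 2)"
  define S where "S = (\<lambda>j0::nat. {..<p} - {j0})"
  have g0: "g a \<ge> 0" for a by (simp add: g_def)
  have key: "real n ^ 2 * (\<Prod>j<p. g (ks j)) \<le> real p * (\<Sum>j0<p. \<Prod>j\<in>S j0. g (ks j))"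
    if ks: "ks \<in> comps p n" for ks
  proof -
    have sumn: "real n = (\<Sum>j<p. real (ks j))" using ks unfolding comps_def by (simp flip: of_nat_sum)
    have "real n ^ 2 \<le> (\<Sum>j<p. real (ks j) ^ 2) * real p"
      using sum_squared_le_sum_of_squares[of "\<lambda>j. real (ks j)" "{..<p}"] sumn by simp
    then have "real n ^ 2 * (\<Prod>j<p. g (ks j)) \<le> (\<Sum>j<p. real (ks j) ^ 2) * real p * (\<Prod>j<p. g (ks j))"
      by (rule mult_right_mono) (simp add: prod_nonneg g0)
    also have "\<dots> = real p * (\<Sum>j0<p. real (ks j0) ^ 2 * (\<Prod>j<p. g (ks j)))"
      by (simp add: sum_distrib_right sum_distrib_left mult_ac)
    also have "\<dots> = real p * (\<Sum>j0<p. \<Prod>j\<in>S j0. g (ks j))"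
    proof -
      have "real (ks j0) ^ 2 * (\<Prod>j<p. g (ks j)) = (\<Prod>j\<in>S j0. g (ks j))" if "j0 < p" for j0
      proof -
        have "(\<Prod>j<p. g (ks j)) = g (ks j0) * (\<Prod>j\<in>S j0. g (ks j))"
          unfolding S_def using that by (subst prod.remove[of _ j0]) auto
        moreover have "real (ks j0) ^ 2 * g (ks j0) = 1"
          using comps_range[OF ks that] by (simp add: g_def)
        ultimately show ?thesis by (metis mult.assoc mult_1)
      qed
      then show ?thesis by simp
    qed
    finally show ?thesis .
  qed
  have inner: "(\<Sum>ks\<in>comps p n. \<Prod>j\<in>S j0. g (ks j)) \<le> 2 ^ (p - 1)" if j0: "j0 < p" for j0
  proof -
    have cardS: "card (S j0) = p - 1" using j0 by (simp add: S_def)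
    have inj: "inj_on (\<lambda>ks. restrict ks (S j0)) (comps p n)"
    proof (rule inj_onI)
      fix ks ks' assume A: "ks \<in> comps p n" "ks' \<in> comps p n" "restrict ks (S j0) = restrict ks' (S j0)"
      have eqS: "ks j = ks' j" if "j \<in> S j0" for j using A(3) that by (metis restrict_apply')
      have "(\<Sum>j<p. ks j) = ks j0 + (\<Sum>j\<in>S j0. ks j)" unfolding S_def using j0
        by (subst sum.remove[of _ j0]) auto
      moreover have "(\<Sum>j<p. ks' j) = ks' j0 + (\<Sum>j\<in>S j0. ks' j)" unfolding S_def using j0
        by (subst sum.remove[of _ j0]) auto
      moreover have "(\<Sum>j\<in>S j0. ks j) = (\<Sum>j\<in>S j0. ks' j)" using eqS by (rule sum.cong[OF refl])
      ultimately have "ks j0 = ks' j0" using A(1,2) by (simp add: comps_def)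
      then show "ks = ks'" using A(1,2) eqS
        by (intro ext) (auto simp: comps_def PiE_def extensional_def S_def, metis)
    qed
    have "(\<Sum>ks\<in>comps p n. \<Prod>j\<in>S j0. g (ks j)) = (\<Sum>ks\<in>comps p n. \<Prod>j\<in>S j0. g (restrict ks (S j0) j))"
      by (intro sum.cong prod.cong) auto
    also have "\<dots> = (\<Sum>r\<in>(\<lambda>ks. restrict ks (S j0)) ` comps p n. \<Prod>j\<in>S j0. g (r j))"
      using inj by (simp add: sum.reindex)
    also have "\<dots> \<le> (\<Sum>r\<in>PiE (S j0) (\<lambda>_. {1..n}). \<Prod>j\<in>S j0. g (r j))"
    proof (rule sum_mono2)
      show "finite (PiE (S j0) (\<lambda>_. {1..n}))" by (simp add: finite_PiE S_def)
      show "(\<lambda>ks. restrict ks (S j0)) ` comps p n \<subseteq> PiE (S j0) (\<lambda>_. {1..n})"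
        using comps_range by (auto simp: S_def PiE_def Pi_def)
      show "\<And>b. b \<in> PiE (S j0) (\<lambda>_. {1..n}) - (\<lambda>ks. restrict ks (S j0)) ` comps p n \<Longrightarrow>
           0 \<le> (\<Prod>j\<in>S j0. g (b j))" by (simp add: prod_nonneg g0)
    qed
    also have "\<dots> = (\<Prod>j\<in>S j0. \<Sum>a\<in>{1..n}. g a)"
      by (rule prod_sum_PiE[symmetric]) (auto simp: S_def)
    also have "\<dots> \<le> (\<Prod>j\<in>S j0. 2)"
      by (rule prod_mono) (use inv_sq_sum2[of n] in \<open>auto simp: g_def sum_nonneg\<close>)
    also have "\<dots> = 2 ^ (p - 1)" using cardS by simp
    finally show ?thesis .
  qed
  have "real n ^ 2 * (\<Sum>ks\<in>comps p n. \<Prod>j<p. g (ks j)) = (\<Sum>ks\<in>comps p n. real n ^ 2 * (\<Prod>j<p. g (ks j)))"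
    by (simp add: sum_distrib_left)
  also have "\<dots> \<le> (\<Sum>ks\<in>comps p n. real p * (\<Sum>j0<p. \<Prod>j\<in>S j0. g (ks j)))"
    by (rule sum_mono) (rule key)
  also have "\<dots> = real p * (\<Sum>j0<p. \<Sum>ks\<in>comps p n. \<Prod>j\<in>S j0. g (ks j))"
    by (simp add: sum_distrib_left sum.swap[of _ "comps p n"])
  also have "\<dots> \<le> real p * (\<Sum>j0<p. 2 ^ (p - 1))"
    by (intro mult_left_mono sum_mono inner) auto
  also have "\<dots> = real p * real p * 2 ^ (p - 1)" by simp
  also have "\<dots> \<le> 8 ^ p"
  proof -
    have "real p \<le> 2 ^ p" using less_exp[of p] by (metis of_nat_le_iff of_nat_numeral of_nat_power less_imp_le)
    then have "real p * real p \<le> 2 ^ p * 2 ^ p" by (intro mult_mono) auto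
    moreover have "(2::real) ^ (p - 1) \<le> 2 ^ p" by (intro power_increasing) auto
    ultimately have "real p * real p * 2 ^ (p - 1) \<le> 2 ^ p * 2 ^ p * 2 ^ p"
      by (intro mult_mono) auto
    also have "\<dots> = 8 ^ p" by (simp add: power_mult_distrib[symmetric])
    finally show ?thesis .
  qed
  finally have "real n ^ 2 * (\<Sum>ks\<in>comps p n. \<Prod>j<p. g (ks j)) \<le> 8 ^ p" .
  then show ?thesis using assms by (simp add: g_def field_simps)
qed

lemma geom_tail: assumes y: "(0::real) \<le> y" "y \<le> 1/2" and n: "n \<ge> 1" shows "(\<Sum>p\<in>{2..n}. y ^ p) \<le> 2 * y^2 - 2 * y ^ (n+1)"
  using n proof (induction n rule: dec_induct)
  case base then show ?case by (simp add: power2_eq_square)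
next
  case (step n)
  have "(\<Sum>p\<in>{2..Suc n}. y ^ p) = (\<Sum>p\<in>{2..n}. y ^ p) + y ^ (Suc n)"
    using step by (simp add: atLeastAtMostSuc_conv)
  also have "\<dots> \<le> 2 * y^2 - 2 * y ^ (n+1) + y ^ (n+1)" using step by simp
  also have "\<dots> \<le> 2 * y^2 - 2 * y ^ (Suc n + 1)"
  proof -
    have "2 * y ^ (n+2) \<le> y ^ (n+1)"
    proof -
      have "(2*y) * y^(n+1) \<le> 1 * y^(n+1)" using y by (intro mult_right_mono) auto
      then show ?thesis by (simp add: algebra_simps)
    qed
    then show ?thesis by simp
  qed
  finally show ?case .
qed

lemma geom_tail2: "(0::real) \<le> y \<Longrightarrow> y \<le> 1/2 \<Longrightarrow> (\<Sum>p\<in>{2..n}. y ^ p) \<le> 2 * y^2"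
proof (cases "n \<ge> 1")
  case True
  assume y: "(0::real) \<le> y" "y \<le> 1/2"
  have "0 \<le> y ^ (n+1)" using y by simp
  then show ?thesis using geom_tail[OF y True] by linarith
next
  case False then have "{2..n} = {}" by auto
  then show ?thesis by simp
qed



lemma posdef_lb:
  fixes M :: "real^'m^'m"
  assumes "pos_def_mat M"
  shows "\<exists>\<mu>>0. \<forall>x. x \<bullet> (M *v x) \<ge> \<mu> * norm x ^ 2"
proof -
  have ne: "sphere (0::real^'m) 1 \<noteq> {}"
    using vector_choose_size[of 1] by (auto simp: sphere_def)
  have "continuous_on (sphere 0 1) (\<lambda>x::real^'m. x \<bullet> (M *v x))"
    by (intro continuous_intros)
  then obtain x0 where x0: "x0 \<in> sphere 0 1" and min: "\<And>y. y \<in> sphere 0 1 \<Longrightarrow> x0 \<bullet> (M *v x0) \<le> y \<bullet> (M *v y)"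
    using continuous_attains_inf[OF compact_sphere ne] by blast
  have x0nz: "x0 \<noteq> 0" using x0 by auto
  have pos: "x0 \<bullet> (M *v x0) > 0" using assms x0nz by (simp add: pos_def_mat_def)
  have "x \<bullet> (M *v x) \<ge> x0 \<bullet> (M *v x0) * norm x ^ 2" for x
  proof (cases "x = 0")
    case True then show ?thesis by simp
  next
    case False
    define u where "u = (1 / norm x) *\<^sub>R x"
    have u: "u \<in> sphere 0 1" using False by (simp add: u_def)
    have xu: "x = norm x *\<^sub>R u" using False by (simp add: u_def)
    have "x \<bullet> (M *v x) = norm x ^ 2 * (u \<bullet> (M *v u))"
      by (subst (1 2) xu) (simp add: matrix_vector_mult_scaleR power2_eq_square)
    also have "\<dots> \<ge> norm x ^ 2 * (x0 \<bullet> (M *v x0))"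
      using min[OF u] by (intro mult_left_mono) auto
    finally show ?thesis by (simp add: mult.commute)
  qed
  with pos show ?thesis by blast
qed

definition Hq :: "real^'m^'m \<Rightarrow> complex^'m \<Rightarrow> complex" where
  "Hq M v = (\<Sum>i\<in>UNIV. \<Sum>j\<in>UNIV. cnj (v$i) * complex_of_real (M$i$j) * v$j)"

definition ReV :: "complex^'m \<Rightarrow> real^'m" where "ReV v = (\<chi> i. Re (v$i))"
definition ImV :: "complex^'m \<Rightarrow> real^'m" where "ImV v = (\<chi> i. Im (v$i))"

lemma Hq_real:
  fixes M :: "real^'m^'m"
  assumes sym: "transpose M = M"
  shows "Hq M v = complex_of_real (ReV v \<bullet> (M *v ReV v) + ImV v \<bullet> (M *v ImV v))"
proof (rule complex_eqI)
  have Mij: "M$j$i = M$i$j" for i j using sym by (metis transpose_def vec_lambda_beta)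
  show "Re (Hq M v) = Re (complex_of_real (ReV v \<bullet> (M *v ReV v) + ImV v \<bullet> (M *v ImV v)))"
    by (simp add: Hq_def ReV_def ImV_def inner_vec_def matrix_vector_mult_def sum_distrib_left
        sum.distrib[symmetric] algebra_simps)
  have "(\<Sum>i\<in>UNIV. \<Sum>j\<in>UNIV. M$i$j * (Re (v$i) * Im (v$j))) = (\<Sum>i\<in>UNIV. \<Sum>j\<in>UNIV. M$i$j * (Im (v$i) * Re (v$j)))"
    by (subst sum.swap) (simp add: Mij mult_ac)
  then show "Im (Hq M v) = Im (complex_of_real (ReV v \<bullet> (M *v ReV v) + ImV v \<bullet> (M *v ImV v)))"
    by (simp add: Hq_def algebra_simps sum_subtractf)
qed

lemma norm_sq_ReIm: "norm v ^ 2 = norm (ReV v) ^ 2 + norm (ImV v) ^ 2"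
proof -
  have "norm v ^ 2 = (\<Sum>i\<in>UNIV. cmod (v$i) ^ 2)"
    by (simp add: norm_vec_def L2_set_def sum_nonneg)
  also have "\<dots> = (\<Sum>i\<in>UNIV. Re (v$i) ^ 2 + Im (v$i) ^ 2)"
    by (simp add: cmod_power2)
  also have "\<dots> = norm (ReV v) ^ 2 + norm (ImV v) ^ 2"
    by (simp add: norm_vec_def L2_set_def sum_nonneg sum.distrib ReV_def ImV_def)
  finally show ?thesis .
qed

lemma cs_complex: "cmod (\<Sum>i\<in>UNIV. cnj (v$i) * w$i) \<le> norm v * norm (w::complex^'m)"
proof -
  have "cmod (\<Sum>i\<in>UNIV. cnj (v$i) * w$i) \<le> (\<Sum>i\<in>UNIV. \<bar>cmod (v$i)\<bar> * \<bar>cmod (w$i)\<bar>)"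
    by (rule order_trans[OF norm_sum]) (simp add: norm_mult)
  also have "\<dots> \<le> L2_set (\<lambda>i. cmod (v$i)) UNIV * L2_set (\<lambda>i. cmod (w$i)) UNIV"
    by (rule L2_set_mult_ineq)
  finally show ?thesis by (simp add: norm_vec_def)
qed



lemma D_quad:
  fixes \<Gamma> A :: "real^'m^'m"
  assumes symG: "transpose \<Gamma> = \<Gamma>" and symA: "transpose A = A"
  shows "(\<Sum>i\<in>UNIV. cnj (v$i) * (Dmat \<Gamma> A \<epsilon> s *v v)$i) =
     complex_of_real (\<epsilon> * (ReV v \<bullet> (A *v ReV v) + ImV v \<bullet> (A *v ImV v) - s^2 * norm v ^ 2))
     + \<i> * complex_of_real (s * (ReV v \<bullet> (\<Gamma> *v ReV v) + ImV v \<bullet> (\<Gamma> *v ImV v)))"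
proof -
  define H :: "real^'m^'m" where "H = (\<chi> i j. A$i$j - s^2 * (if i = j then 1 else 0))"
  have symH: "transpose H = H"
    using symA unfolding H_def transpose_def by (simp add: vec_eq_iff)
  have Dij: "Dmat \<Gamma> A \<epsilon> s $ i $ j = complex_of_real \<epsilon> * complex_of_real (H$i$j) + \<i> * complex_of_real s * complex_of_real (\<Gamma>$i$j)" for i j
    by (simp add: Dmat_def H_def algebra_simps)
  have e1: "(\<Sum>i\<in>UNIV. cnj (v$i) * (Dmat \<Gamma> A \<epsilon> s *v v)$i) = complex_of_real \<epsilon> * Hq H v + \<i> * complex_of_real s * Hq \<Gamma> v"
    by (simp add: matrix_vector_mult_def Dij Hq_def sum_distrib_left sum.distrib[symmetric] algebra_simps)
  have Hv: "H *v x = A *v x - s^2 *\<^sub>R x" for x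
  proof -
    have "(H *v x)$i = (A *v x)$i - s^2 * x$i" for i
    proof -
      have "(H *v x)$i = (\<Sum>j\<in>UNIV. A$i$j * x$j - (if i = j then s^2 * x$j else 0))"
        unfolding H_def matrix_vector_mult_def by (simp, intro sum.cong) (auto simp: algebra_simps)
      also have "\<dots> = (A *v x)$i - s^2 * x$i"
        by (simp add: sum_subtractf matrix_vector_mult_def)
      finally show ?thesis .
    qed
    then show ?thesis by (simp add: vec_eq_iff)
  qed
  have e2: "Hq H v = complex_of_real (ReV v \<bullet> (A *v ReV v) + ImV v \<bullet> (A *v ImV v) - s^2 * norm v ^ 2)"
  proof -
    have "ReV v \<bullet> (H *v ReV v) + ImV v \<bullet> (H *v ImV v) = ReV v \<bullet> (A *v ReV v) + ImV v \<bullet> (A *v ImV v) - s^2 * norm v ^ 2"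
      unfolding Hv norm_sq_ReIm[of v] by (simp add: inner_diff_right power2_norm_eq_inner algebra_simps)
    then show ?thesis by (simp add: Hq_real[OF symH])
  qed
  have e3: "Hq \<Gamma> v = complex_of_real (ReV v \<bullet> (\<Gamma> *v ReV v) + ImV v \<bullet> (\<Gamma> *v ImV v))"
    by (rule Hq_real[OF symG])
  show ?thesis unfolding e1 e2 e3 by simp
qed

lemma D_lower:
  fixes \<Gamma> A :: "real^'m^'m"
  assumes symG: "transpose \<Gamma> = \<Gamma>" and symA: "transpose A = A"
    and \<gamma>: "\<gamma> > 0" "\<And>x. x \<bullet> (\<Gamma> *v x) \<ge> \<gamma> * norm x ^ 2"
    and \<alpha>: "\<alpha> > 0" "\<And>x. x \<bullet> (A *v x) \<ge> \<alpha> * norm x ^ 2"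
  shows "norm (Dmat \<Gamma> A \<epsilon> s *v v) \<ge> \<gamma> * \<bar>s\<bar> * norm v"
    and "s^2 \<le> \<alpha>/2 \<Longrightarrow> norm (Dmat \<Gamma> A \<epsilon> s *v v) \<ge> \<bar>\<epsilon>\<bar> * \<alpha> / 2 * norm v"
proof -
  define z where "z = (\<Sum>i\<in>UNIV. cnj (v$i) * (Dmat \<Gamma> A \<epsilon> s *v v)$i)"
  define qA where "qA = ReV v \<bullet> (A *v ReV v) + ImV v \<bullet> (A *v ImV v)"
  define qG where "qG = ReV v \<bullet> (\<Gamma> *v ReV v) + ImV v \<bullet> (\<Gamma> *v ImV v)"
  have z: "z = complex_of_real (\<epsilon> * (qA - s^2 * norm v ^ 2)) + \<i> * complex_of_real (s * qG)"
    unfolding z_def qA_def qG_def by (rule D_quad[OF symG symA])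
  have cs: "cmod z \<le> norm v * norm (Dmat \<Gamma> A \<epsilon> s *v v)"
    unfolding z_def by (rule cs_complex)
  have qA: "qA \<ge> \<alpha> * norm v ^ 2"
    using \<alpha>(2)[of "ReV v"] \<alpha>(2)[of "ImV v"] unfolding qA_def norm_sq_ReIm by (simp add: algebra_simps)
  have qG: "qG \<ge> \<gamma> * norm v ^ 2"
    using \<gamma>(2)[of "ReV v"] \<gamma>(2)[of "ImV v"] unfolding qG_def norm_sq_ReIm by (simp add: algebra_simps)
  have Imz: "Im z = s * qG" and Rez: "Re z = \<epsilon> * (qA - s^2 * norm v ^ 2)" by (simp_all add: z)
  show "norm (Dmat \<Gamma> A \<epsilon> s *v v) \<ge> \<gamma> * \<bar>s\<bar> * norm v"
  proof (cases "v = 0")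
    case True then show ?thesis by simp
  next
    case False
    have "\<gamma> * \<bar>s\<bar> * norm v ^ 2 \<le> \<bar>s\<bar> * qG" using mult_right_mono[OF qG, of "\<bar>s\<bar>"] by (simp add: mult_ac)
    also have "\<dots> = \<bar>Im z\<bar>" by (simp add: Imz abs_mult) (use qG \<gamma> in \<open>smt (verit) mult_nonneg_nonneg zero_le_power2 norm_ge_zero\<close>)
    also have "\<dots> \<le> cmod z" by (rule abs_Im_le_cmod)
    also have "\<dots> \<le> norm v * norm (Dmat \<Gamma> A \<epsilon> s *v v)" by (rule cs)
    finally have "norm v * (\<gamma> * \<bar>s\<bar> * norm v) \<le> norm v * norm (Dmat \<Gamma> A \<epsilon> s *v v)"
      by (simp add: power2_eq_square mult_ac)
    then show ?thesis using False by simp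
  qed
  assume s: "s^2 \<le> \<alpha>/2"
  show "norm (Dmat \<Gamma> A \<epsilon> s *v v) \<ge> \<bar>\<epsilon>\<bar> * \<alpha> / 2 * norm v"
  proof (cases "v = 0")
    case True then show ?thesis by simp
  next
    case False
    have h: "\<alpha> / 2 * norm v ^ 2 \<le> qA - s^2 * norm v ^ 2"
    proof -
      have "s^2 * norm v ^ 2 \<le> \<alpha>/2 * norm v ^ 2" using s by (intro mult_right_mono) auto
      then show ?thesis using qA by simp
    qed
    have "\<bar>\<epsilon>\<bar> * \<alpha> / 2 * norm v ^ 2 \<le> \<bar>\<epsilon>\<bar> * (qA - s^2 * norm v ^ 2)"
      using mult_left_mono[OF h, of "\<bar>\<epsilon>\<bar>"] by simp
    also have "\<dots> = \<bar>Re z\<bar>"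
    proof -
      have "0 \<le> \<alpha>/2 * norm v^2" using \<alpha>(1) by simp
      then have "0 \<le> qA - s^2 * norm v ^ 2" using h by linarith
      then show ?thesis by (simp add: Rez abs_mult)
    qed
    also have "\<dots> \<le> cmod z" by (rule abs_Re_le_cmod)
    also have "\<dots> \<le> norm v * norm (Dmat \<Gamma> A \<epsilon> s *v v)" by (rule cs)
    finally have "norm v * (\<bar>\<epsilon>\<bar> * \<alpha> / 2 * norm v) \<le> norm v * norm (Dmat \<Gamma> A \<epsilon> s *v v)"
      by (simp add: power2_eq_square mult_ac)
    then show ?thesis using False by simp
  qed
qed



lemma Dinv_bound:
  fixes \<Gamma> A :: "real^'m^'m"
  assumes symG: "transpose \<Gamma> = \<Gamma>" and symA: "transpose A = A"
    and \<gamma>: "\<gamma> > 0" "\<And>x. x \<bullet> (\<Gamma> *v x) \<ge> \<gamma> * norm x ^ 2"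
    and \<alpha>: "\<alpha> > 0" "\<And>x. x \<bullet> (A *v x) \<ge> \<alpha> * norm x ^ 2"
    and s: "s \<noteq> 0" and e: "\<bar>\<epsilon>\<bar> \<le> 1"
  shows "\<bar>\<epsilon>\<bar> * norm (matrix_inv (Dmat \<Gamma> A \<epsilon> s) *v y) \<le> max (2/\<alpha>) (1/(\<gamma> * sqrt (\<alpha>/2))) * norm y"
    and "\<bar>\<epsilon>\<bar> * norm (matrix_inv (Dmat \<Gamma> A \<epsilon> s) *v y) \<le> \<bar>\<epsilon>\<bar> / (\<gamma> * \<bar>s\<bar>) * norm y"
proof -
  define D where "D = Dmat \<Gamma> A \<epsilon> s"
  have low1: "norm (D *v v) \<ge> \<gamma> * \<bar>s\<bar> * norm v" for v
    unfolding D_def by (rule D_lower(1)[OF symG symA \<gamma> \<alpha>])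
  have low2: "s^2 \<le> \<alpha>/2 \<Longrightarrow> norm (D *v v) \<ge> \<bar>\<epsilon>\<bar> * \<alpha> / 2 * norm v" for v
    unfolding D_def by (rule D_lower(2)[OF symG symA \<gamma> \<alpha>])
  have gs: "\<gamma> * \<bar>s\<bar> > 0" using \<gamma> s by simp
  have ker: "\<forall>x. D *v x = 0 \<longrightarrow> x = 0"
  proof (intro allI impI)
    fix x assume "D *v x = 0"
    then have "\<gamma> * \<bar>s\<bar> * norm x \<le> 0" using low1[of x] by simp
    then show "x = 0" using gs \<gamma>(1) s by (simp add: mult_le_0_iff)
  qed
  then have "invertible D"
    using matrix_left_invertible_ker invertible_left_inverse by blast
  then have "D ** matrix_inv D = mat 1"
    unfolding invertible_def matrix_inv_def by (rule someI_ex[where P="\<lambda>A'. D ** A' = mat 1 \<and> A' ** D = mat 1", THEN conjunct1])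
  then have Dw: "D *v (matrix_inv D *v y) = y"
    by (simp add: matrix_vector_mul_assoc)
  define w where "w = matrix_inv D *v y"
  have y1: "\<gamma> * \<bar>s\<bar> * norm w \<le> norm y" using low1[of w] Dw by (simp add: w_def)
  then have w1: "norm w \<le> norm y / (\<gamma> * \<bar>s\<bar>)" using gs by (simp add: field_simps)
  show "\<bar>\<epsilon>\<bar> * norm (matrix_inv (Dmat \<Gamma> A \<epsilon> s) *v y) \<le> \<bar>\<epsilon>\<bar> / (\<gamma> * \<bar>s\<bar>) * norm y"
    using mult_left_mono[OF w1, of "\<bar>\<epsilon>\<bar>"] by (simp add: D_def w_def)
  show "\<bar>\<epsilon>\<bar> * norm (matrix_inv (Dmat \<Gamma> A \<epsilon> s) *v y) \<le> max (2/\<alpha>) (1/(\<gamma> * sqrt (\<alpha>/2))) * norm y"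
  proof (cases "s^2 \<le> \<alpha>/2")
    case True
    have "\<bar>\<epsilon>\<bar> * \<alpha> / 2 * norm w \<le> norm y" using low2[OF True, of w] Dw by (simp add: w_def)
    then have "\<bar>\<epsilon>\<bar> * norm w \<le> 2 / \<alpha> * norm y" using \<alpha>(1) by (simp add: field_simps)
    also have "\<dots> \<le> max (2/\<alpha>) (1/(\<gamma> * sqrt (\<alpha>/2))) * norm y" by (intro mult_right_mono) auto
    finally show ?thesis by (simp add: D_def w_def)
  next
    case False
    have sq: "sqrt (\<alpha>/2) \<le> \<bar>s\<bar>" using False by (metis less_imp_le not_le real_sqrt_abs real_sqrt_le_mono)
    have sa: "sqrt (\<alpha>/2) > 0" using \<alpha> by simp
    have "\<bar>\<epsilon>\<bar> * norm w \<le> norm w" using e by (simp add: mult_left_le_one_le)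
    also have "\<dots> \<le> norm y / (\<gamma> * \<bar>s\<bar>)" by (rule w1)
    also have "\<dots> \<le> norm y / (\<gamma> * sqrt (\<alpha>/2))"
      using sq sa \<gamma> by (intro divide_left_mono mult_left_mono mult_pos_pos) auto
    also have "\<dots> = 1/(\<gamma> * sqrt (\<alpha>/2)) * norm y" by simp
    also have "\<dots> \<le> max (2/\<alpha>) (1/(\<gamma> * sqrt (\<alpha>/2))) * norm y" by (intro mult_right_mono) auto
    finally show ?thesis by (simp add: D_def w_def)
  qed
qed



lemma uhist_char:
  "uhist \<Gamma> A \<omega> f G \<epsilon> \<zeta> n j = (if 1 \<le> j \<and> j \<le> n then useq \<Gamma> A \<omega> f G \<epsilon> \<zeta> j else (\<lambda>_. 0))"
proof (induction n arbitrary: j)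
  case 0 then show ?case by auto
next
  case (Suc n)
  show ?case
  proof (cases "j = Suc n")
    case True then show ?thesis by (simp add: useq_def)
  next
    case False then show ?thesis using Suc by auto
  qed
qed

lemma useq_Suc:
  "useq \<Gamma> A \<omega> f G \<epsilon> \<zeta> (Suc n) = ustep \<Gamma> A \<omega> f G \<epsilon> \<zeta> (uhist \<Gamma> A \<omega> f G \<epsilon> \<zeta> n) (Suc n)"
  by (simp add: useq_def)

lemma norm_smult_cvec: "norm ((c::complex) *s (x::complex^'m)) = cmod c * norm x"
  by (simp add: norm_vec_def norm_mult L2_set_right_distrib)

lemma norm_le_sum_cvec: "norm (x::complex^'m) \<le> (\<Sum>i\<in>UNIV. cmod (x$i))"
  by (simp add: norm_vec_def L2_set_le_sum)

lemma cnth_le: "cmod ((x::complex^'m) $ i) \<le> norm x"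
  unfolding norm_vec_def by (rule member_le_L2_set) simp_all

lemma Gapply_bound:
  fixes G :: "'m::finite \<Rightarrow> 'm list \<Rightarrow> real"
  assumes Gb: "\<And>i xs. \<bar>G i xs\<bar> \<le> \<Delta> / \<rho> ^ length xs"
  shows "norm (Gapply G p ys) \<le> real CARD('m) ^ (p+1) * (\<Delta> / \<rho> ^ p) * (\<Prod>j<p. norm (ys j))"
proof -
  define L where "L = {xs::'m list. length xs = p}"
  have finL: "finite L" unfolding L_def using finite_lists_length_eq[of "UNIV::'m set" p] by simp
  have cardL: "card L = CARD('m) ^ p" unfolding L_def using card_lists_length_eq[of "UNIV::'m set" p] by simp
  have comp: "cmod (Gapply G p ys $ i) \<le> real CARD('m) ^ p * (\<Delta> / \<rho> ^ p) * (\<Prod>j<p. norm (ys j))" for i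
  proof -
    have "cmod (Gapply G p ys $ i) \<le> (\<Sum>xs\<in>L. cmod (complex_of_real (G i xs) * (\<Prod>j<p. ys j $ (xs ! j))))"
      unfolding Gapply_def L_def by (simp add: norm_sum)
    also have "\<dots> \<le> (\<Sum>xs\<in>L. (\<Delta> / \<rho> ^ p) * (\<Prod>j<p. norm (ys j)))"
    proof (rule sum_mono)
      fix xs assume "xs \<in> L"
      then have len: "length xs = p" by (simp add: L_def)
      have "cmod (complex_of_real (G i xs) * (\<Prod>j<p. ys j $ (xs ! j))) = \<bar>G i xs\<bar> * (\<Prod>j<p. cmod (ys j $ (xs ! j)))"
        by (simp add: norm_mult prod_norm)
      also have "\<dots> \<le> (\<Delta> / \<rho> ^ p) * (\<Prod>j<p. norm (ys j))"
      proof (intro mult_mono prod_mono conjI)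
        show "\<bar>G i xs\<bar> \<le> \<Delta> / \<rho> ^ p" using Gb[of i xs] len by simp
        fix j assume "j \<in> {..<p}"
        show "cmod (ys j $ (xs ! j)) \<le> norm (ys j)" by (rule cnth_le)
      qed (use Gb[of i xs] len in \<open>auto simp: prod_nonneg intro: order_trans[OF abs_ge_zero]\<close>)
      finally show "cmod (complex_of_real (G i xs) * (\<Prod>j<p. ys j $ (xs ! j))) \<le> (\<Delta> / \<rho> ^ p) * (\<Prod>j<p. norm (ys j))" .
    qed
    also have "\<dots> = real CARD('m) ^ p * (\<Delta> / \<rho> ^ p) * (\<Prod>j<p. norm (ys j))"
      using cardL by simp
    finally show ?thesis .
  qed
  have "norm (Gapply G p ys) \<le> (\<Sum>i\<in>UNIV. cmod (Gapply G p ys $ i))" by (rule norm_le_sum_cvec)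
  also have "\<dots> \<le> (\<Sum>i\<in>(UNIV::'m set). real CARD('m) ^ p * (\<Delta> / \<rho> ^ p) * (\<Prod>j<p. norm (ys j)))"
    by (rule sum_mono) (rule comp)
  also have "\<dots> = real CARD('m) ^ (p+1) * (\<Delta> / \<rho> ^ p) * (\<Prod>j<p. norm (ys j))" by simp
  finally show ?thesis .
qed

lemma normZ_sum: "normZ (\<Sum>j\<in>J. (\<nu>s j :: int^'d)) \<le> (\<Sum>j\<in>J. normZ (\<nu>s j))"
proof -
  have "((\<chi> i. real_of_int ((\<Sum>j\<in>J. \<nu>s j)$i)) :: real^'d) = (\<Sum>j\<in>J. (\<chi> i. real_of_int (\<nu>s j $ i)))"
    by (simp add: vec_eq_iff)
  then show ?thesis unfolding normZ_def by (simp add: norm_sum)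
qed

lemma normZ_0[simp]: "normZ (0::int^'d) = 0"
  by (simp add: normZ_def vec_eq_iff)

lemma infsum_norm_le:
  fixes T :: "'a \<Rightarrow> complex^'m"
  assumes S: "(\<lambda>x. C * P x) summable_on X" and b: "\<And>x. x \<in> X \<Longrightarrow> norm (T x) * w \<le> C * P x" and w: "w \<ge> 1"
  shows "norm (infsum T X) * w \<le> infsum (\<lambda>x. C * P x) X"
proof -
  have b': "norm (T x) \<le> C * P x" if "x \<in> X" for x
    using b[OF that] w by (smt (verit) mult_le_cancel_left1 norm_ge_zero)
  have sn: "(\<lambda>x. norm (T x)) summable_on X"
    by (rule summable_on_comparison_test[OF S]) (use b' in auto)
  have "norm (infsum T X) \<le> infsum (\<lambda>x. norm (T x)) X"
    by (rule norm_infsum_bound) (use sn in simp)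
  then have "norm (infsum T X) * w \<le> infsum (\<lambda>x. norm (T x)) X * w"
    using w by (intro mult_right_mono) auto
  also have "\<dots> = infsum (\<lambda>x. norm (T x) * w) X"
    by (rule infsum_cmult_left[symmetric]) (use sn in simp)
  also have "\<dots> \<le> infsum (\<lambda>x. C * P x) X"
    by (rule infsum_mono) (use sn S b in \<open>auto intro: summable_on_cmult_left\<close>)
  finally show ?thesis .
qed



lemma scalar_step:
  fixes c0 mm \<Delta> \<rho> Q R :: real
  assumes c0: "c0 \<ge> 0" and mm: "mm \<ge> 0" and D: "\<Delta> \<ge> 0" and rho: "\<rho> > 0" and Q: "Q > 0" and R: "R > 0"
    and y: "8 * mm * Q / \<rho> \<le> 1/2" and Rb: "512 * c0 * mm^3 * \<Delta> * Q / \<rho>^2 \<le> R" and n: "n \<ge> 1"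
  shows "c0 * (\<Sum>p\<in>{2..n}. \<Sum>ks\<in>comps p n. mm^(p+1) * (\<Delta>/\<rho>^p) * (\<Prod>j<p. Q * R^(ks j) / real (ks j)^2))
         \<le> Q * R^(Suc n) / real (Suc n)^2"
proof -
  define y where "y = 8 * mm * Q / \<rho>"
  have y0: "y \<ge> 0" using mm Q rho by (simp add: y_def)
  have inner: "(\<Sum>ks\<in>comps p n. mm^(p+1) * (\<Delta>/\<rho>^p) * (\<Prod>j<p. Q * R^(ks j) / real (ks j)^2))
      \<le> mm * \<Delta> * R^n / real n^2 * y^p" if p: "p \<in> {2..n}" for p
  proof -
    have "(\<Prod>j<p. Q * R^(ks j) / real (ks j)^2) = Q^p * R^n * (\<Prod>j<p. 1 / real (ks j)^2)"
      if ks: "ks \<in> comps p n" for ks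
    proof -
      have "(\<Prod>j<p. Q * R^(ks j) / real (ks j)^2) = (\<Prod>j<p. (Q * R^(ks j)) * (1 / real (ks j)^2))"
        by (rule prod.cong) auto
      also have "\<dots> = (\<Prod>j<p. Q * R^(ks j)) * (\<Prod>j<p. 1 / real (ks j)^2)" by (rule prod.distrib)
      also have "(\<Prod>j<p. Q * R^(ks j)) = (\<Prod>j<p. Q) * (\<Prod>j<p. R^(ks j))" by (rule prod.distrib)
      also have "(\<Prod>j<p. R^(ks j)) = R^n"
        using ks by (simp add: comps_def power_sum[symmetric])
      finally show ?thesis by simp
    qed
    then have "(\<Sum>ks\<in>comps p n. mm^(p+1) * (\<Delta>/\<rho>^p) * (\<Prod>j<p. Q * R^(ks j) / real (ks j)^2))
        = (\<Sum>ks\<in>comps p n. (mm^(p+1) * (\<Delta>/\<rho>^p) * Q^p * R^n) * (\<Prod>j<p. 1 / real (ks j)^2))"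
      by (intro sum.cong refl) (simp add: mult_ac)
    also have "\<dots> = mm^(p+1) * (\<Delta>/\<rho>^p) * Q^p * R^n * (\<Sum>ks\<in>comps p n. \<Prod>j<p. 1 / real (ks j)^2)"
      by (rule sum_distrib_left[symmetric])
    also have "\<dots> \<le> mm^(p+1) * (\<Delta>/\<rho>^p) * Q^p * R^n * (8^p / real n^2)"
      using p n by (intro mult_left_mono comps_sq_bound) (auto intro!: mult_nonneg_nonneg simp: mm D Q R less_imp_le rho)
    also have "\<dots> = mm * \<Delta> * R^n / real n^2 * y^p"
      using rho by (simp add: y_def power_mult_distrib power_divide field_simps)
    finally show ?thesis .
  qed
  have "c0 * (\<Sum>p\<in>{2..n}. \<Sum>ks\<in>comps p n. mm^(p+1) * (\<Delta>/\<rho>^p) * (\<Prod>j<p. Q * R^(ks j) / real (ks j)^2))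
     \<le> c0 * (\<Sum>p\<in>{2..n}. mm * \<Delta> * R^n / real n^2 * y^p)"
    by (intro mult_left_mono sum_mono inner c0)
  also have "\<dots> = c0 * (mm * \<Delta> * R^n / real n^2) * (\<Sum>p\<in>{2..n}. y^p)"
    by (simp add: sum_distrib_left mult.assoc)
  also have "\<dots> \<le> c0 * (mm * \<Delta> * R^n / real n^2) * (2 * y^2)"
    by (intro mult_left_mono geom_tail2 y0) (use y c0 mm D R in \<open>auto simp: y_def\<close>)
  also have "\<dots> = (128 * c0 * mm^3 * \<Delta> * Q / \<rho>^2) * Q * R^n / real n^2"
    using rho by (simp add: y_def power2_eq_square power3_eq_cube field_simps)
  also have "\<dots> \<le> (128 * c0 * mm^3 * \<Delta> * Q / \<rho>^2) * Q * R^n * (4 / real (Suc n)^2)"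
  proof -
    have a: "real (Suc n) \<le> 2 * real n" using n by simp
    have "real (Suc n)^2 \<le> (2*real n)^2" using a by (intro power_mono) auto
    then have "real (Suc n)^2 \<le> 4 * real n^2" by (simp add: power_mult_distrib)
    then have "1 / real n^2 \<le> 4 / real (Suc n)^2"
      using n by (simp add: field_simps)
    moreover have "0 \<le> (128 * c0 * mm^3 * \<Delta> * Q / \<rho>^2) * Q * R^n"
      using c0 mm D Q R rho by simp
    ultimately show ?thesis
      using mult_left_mono by (metis divide_inverse mult_1_left times_divide_eq_right)
  qed
  also have "\<dots> = (512 * c0 * mm^3 * \<Delta> * Q / \<rho>^2) * (Q * R^n / real (Suc n)^2)"
    by (simp add: field_simps)
  also have "\<dots> \<le> R * (Q * R^n / real (Suc n)^2)"
    by (intro mult_right_mono Rb) (use Q R in simp)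
  also have "\<dots> = Q * R^(Suc n) / real (Suc n)^2" by (simp add: mult_ac)
  finally show ?thesis .
qed



lemma Gapply_cong:
  assumes h: "\<And>j. j < p \<Longrightarrow> ys j = ys' j" shows "Gapply G p ys = Gapply G p ys'"
proof -
  have "(\<Prod>j<p. ys j $ (xs ! j)) = (\<Prod>j<p. ys' j $ (xs ! j))" for xs by (rule prod.cong) (auto simp: h)
  then show ?thesis by (simp add: Gapply_def)
qed

lemma W_split:
  assumes "a \<ge> 0" "\<nu>s \<in> splits p \<nu>"
  shows "exp (a * normZ (\<nu>::int^'d)) \<le> (\<Prod>j<p. exp (a * normZ (\<nu>s j)))"
proof -
  have "\<nu> = (\<Sum>j<p. \<nu>s j)" using assms(2) by (simp add: splits_def)
  then have "normZ \<nu> \<le> (\<Sum>j<p. normZ (\<nu>s j))" using normZ_sum by metis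
  then have "a * normZ \<nu> \<le> a * (\<Sum>j<p. normZ (\<nu>s j))" using mult_left_mono[OF _ assms(1)] by blast
  then have "exp (a * normZ \<nu>) \<le> exp (\<Sum>j<p. a * normZ (\<nu>s j))" by (simp add: sum_distrib_left)
  also have "\<dots> = (\<Prod>j<p. exp (a * normZ (\<nu>s j)))" by (rule exp_sum) simp
  finally show ?thesis .
qed

lemma main_induct:
  fixes \<Gamma> A :: "real^'m^'m" and \<omega> :: "real^'d" and f :: "int^'d \<Rightarrow> complex^'m"
    and G :: "'m \<Rightarrow> 'm list \<Rightarrow> real" and \<zeta> :: "real^'m"
  assumes Dinv: "\<And>\<nu> y. \<nu> \<noteq> 0 \<Longrightarrow> \<bar>\<epsilon>\<bar> * norm (matrix_inv (Dmat \<Gamma> A \<epsilon> (dotZ \<omega> \<nu>)) *v y) \<le> c0 * norm y"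
    and Gb: "\<And>i xs. \<bar>G i xs\<bar> \<le> \<Delta> / \<rho> ^ length xs"
    and a: "a \<ge> 0" and c0: "c0 \<ge> 0" and D: "\<Delta> \<ge> 0" and rho: "\<rho> > 0" and Q: "Q > 0" and R: "R > 0"
    and y: "8 * real CARD('m) * Q / \<rho> \<le> 1/2"
    and Rb: "512 * c0 * real CARD('m)^3 * \<Delta> * Q / \<rho>^2 \<le> R"
    and N1s: "(\<lambda>\<nu>. norm (useq \<Gamma> A \<omega> f G \<epsilon> \<zeta> 1 \<nu>) * exp (a * normZ \<nu>)) summable_on UNIV"
    and N1b: "infsum (\<lambda>\<nu>. norm (useq \<Gamma> A \<omega> f G \<epsilon> \<zeta> 1 \<nu>) * exp (a * normZ \<nu>)) UNIV \<le> Q * R"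
  shows "k \<ge> 1 \<Longrightarrow> (\<lambda>\<nu>. norm (useq \<Gamma> A \<omega> f G \<epsilon> \<zeta> k \<nu>) * exp (a * normZ \<nu>)) summable_on UNIV
      \<and> infsum (\<lambda>\<nu>. norm (useq \<Gamma> A \<omega> f G \<epsilon> \<zeta> k \<nu>) * exp (a * normZ \<nu>)) UNIV \<le> Q * R^k / real k^2"
proof (induction k rule: less_induct)
  case (less k)
  define u where "u = useq \<Gamma> A \<omega> f G \<epsilon> \<zeta>"
  define W where "W = (\<lambda>\<mu>::int^'d. exp (a * normZ \<mu>))"
  define g where "g = (\<lambda>i \<mu>. norm (u i \<mu>) * W \<mu>)"
  define mm where "mm = real CARD('m)"
  define C where "C = (\<lambda>p::nat. mm^(p+1) * (\<Delta>/\<rho>^p))"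
  have W1: "W \<mu> \<ge> 1" for \<mu> using a normZ_nonneg[of \<mu>] by (simp add: W_def)
  have g0: "g i \<mu> \<ge> 0" for i \<mu> using W1[of \<mu>] by (simp add: g_def)
  have C0: "C p \<ge> 0" for p using D rho by (simp add: C_def mm_def)
  show ?case
  proof (cases "k = 1")
    case True then show ?thesis using N1s N1b by simp
  next
    case False
    then obtain n where kn: "k = Suc n" and n: "n \<ge> 1" using less.prems by (cases k) auto
    have IH: "g i summable_on UNIV \<and> infsum (g i) UNIV \<le> Q * R^i / real i^2" if "1 \<le> i" "i \<le> n" for i
      using less.IH[of i] that kn by (simp add: g_def u_def W_def)
    have uh: "uhist \<Gamma> A \<omega> f G \<epsilon> \<zeta> n i = u i" if "1 \<le> i" "i \<le> n" for i
      using that by (simp add: uhist_char u_def)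
    have ks_rng: "1 \<le> ks j \<and> ks j \<le> n" if "ks \<in> comps p n" "j < p" for ks p j
      using comps_range[OF that] .
    define P where "P = (\<lambda>p ks (\<nu>s::nat \<Rightarrow> int^'d). \<Prod>j<p. g (ks j) (\<nu>s j))"
    have Pconv: "(P p ks) summable_on splits p \<nu>"
        "(\<lambda>\<nu>. infsum (P p ks) (splits p \<nu>)) summable_on UNIV"
        "infsum (\<lambda>\<nu>. infsum (P p ks) (splits p \<nu>)) UNIV = (\<Prod>j<p. infsum (g (ks j)) UNIV)"
      if "ks \<in> comps p n" for p ks \<nu>
    proof -
      have s: "\<And>j. j < p \<Longrightarrow> (\<lambda>\<mu>. g (ks j) \<mu>) summable_on UNIV" using IH ks_rng[OF that] by blast
      show "(P p ks) summable_on splits p \<nu>"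
        "(\<lambda>\<nu>. infsum (P p ks) (splits p \<nu>)) summable_on UNIV"
        "infsum (\<lambda>\<nu>. infsum (P p ks) (splits p \<nu>)) UNIV = (\<Prod>j<p. infsum (g (ks j)) UNIV)"
        unfolding P_def using conv_sum[of p "\<lambda>j. g (ks j)", OF s g0] by auto
    qed
    define Gk where "Gk = (\<lambda>\<nu>. c0 * (\<Sum>p\<in>{2..n}. \<Sum>ks\<in>comps p n. C p * infsum (P p ks) (splits p \<nu>)))"
    have Pnn: "infsum (P p ks) (splits p \<nu>) \<ge> 0" for p ks \<nu>
      by (rule infsum_nonneg) (simp add: P_def prod_nonneg g0)
    have Gk0: "Gk \<nu> \<ge> 0" for \<nu>
      unfolding Gk_def using c0 C0 Pnn by (intro mult_nonneg_nonneg sum_nonneg) auto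
    have point: "g k \<nu> \<le> Gk \<nu>" for \<nu>
    proof (cases "\<nu> = 0")
      case True
      have "u k \<nu> = 0" using True kn n by (simp add: u_def useq_Suc ustep_def)
      then show ?thesis using Gk0[of \<nu>] by (simp add: g_def)
    next
      case nz: False
      define T where "T = (\<lambda>p ks \<nu>s. Gapply G p (\<lambda>j. u (ks j) (\<nu>s j)))"
      define X where "X = (\<Sum>p\<in>{2..n}. \<Sum>ks\<in>comps p n. infsum (T p ks) (splits p \<nu>))"
      have uk: "u k \<nu> = matrix_inv (Dmat \<Gamma> A \<epsilon> (dotZ \<omega> \<nu>)) *v ((- complex_of_real \<epsilon>) *s X)"
      proof -
        have "(\<Sum>p\<in>{2..n}. \<Sum>ks\<in>comps p n. infsum (\<lambda>\<nu>s. Gapply G p (\<lambda>j. uhist \<Gamma> A \<omega> f G \<epsilon> \<zeta> n (ks j) (\<nu>s j))) (splits p \<nu>)) = X"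
          unfolding X_def T_def
        proof (intro sum.cong refl infsum_cong Gapply_cong)
          fix p ks \<nu>s j assume "ks \<in> comps p n" "j < p"
          then show "uhist \<Gamma> A \<omega> f G \<epsilon> \<zeta> n (ks j) (\<nu>s j) = u (ks j) (\<nu>s j)"
            using uh ks_rng by auto
        qed
        then show ?thesis using nz kn n by (simp add: u_def useq_Suc ustep_def)
      qed
      have "norm (u k \<nu>) = \<bar>\<epsilon>\<bar> * norm (matrix_inv (Dmat \<Gamma> A \<epsilon> (dotZ \<omega> \<nu>)) *v X)"
        unfolding uk vector_scalar_commute norm_smult_cvec by simp
      also have "\<dots> \<le> c0 * norm X" by (rule Dinv[OF nz])
      finally have nk: "norm (u k \<nu>) \<le> c0 * norm X" .
      have nX: "norm X * W \<nu> \<le> (\<Sum>p\<in>{2..n}. \<Sum>ks\<in>comps p n. C p * infsum (P p ks) (splits p \<nu>))"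
      proof -
        have "norm X * W \<nu> \<le> (\<Sum>p\<in>{2..n}. \<Sum>ks\<in>comps p n. norm (infsum (T p ks) (splits p \<nu>))) * W \<nu>"
          unfolding X_def using W1[of \<nu>]
          by (intro mult_right_mono order_trans[OF norm_sum] sum_mono norm_sum) auto
        also have "\<dots> = (\<Sum>p\<in>{2..n}. \<Sum>ks\<in>comps p n. norm (infsum (T p ks) (splits p \<nu>)) * W \<nu>)"
          by (simp add: sum_distrib_right)
        also have "\<dots> \<le> (\<Sum>p\<in>{2..n}. \<Sum>ks\<in>comps p n. infsum (\<lambda>\<nu>s. C p * P p ks \<nu>s) (splits p \<nu>))"
        proof (intro sum_mono infsum_norm_le)
          fix p ks assume ks: "ks \<in> comps p n"
          show "(\<lambda>\<nu>s. C p * P p ks \<nu>s) summable_on splits p \<nu>"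
            by (rule summable_on_cmult_right) (rule Pconv(1)[OF ks])
          show "W \<nu> \<ge> 1" by (rule W1)
          fix \<nu>s assume sp: "\<nu>s \<in> splits p \<nu>"
          have "norm (T p ks \<nu>s) \<le> C p * (\<Prod>j<p. norm (u (ks j) (\<nu>s j)))"
            unfolding T_def C_def mm_def by (rule Gapply_bound[OF Gb])
          moreover have "W \<nu> \<le> (\<Prod>j<p. W (\<nu>s j))"
            unfolding W_def by (rule W_split[OF a sp])
          ultimately have "norm (T p ks \<nu>s) * W \<nu> \<le> (C p * (\<Prod>j<p. norm (u (ks j) (\<nu>s j)))) * (\<Prod>j<p. W (\<nu>s j))"
            using W1 C0 order_trans[OF zero_le_one W1[of \<nu>]] by (intro mult_mono) (auto simp: prod_nonneg)
          also have "\<dots> = C p * P p ks \<nu>s"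
            by (simp add: P_def g_def prod.distrib mult_ac)
          finally show "norm (T p ks \<nu>s) * W \<nu> \<le> C p * P p ks \<nu>s" .
        qed
        also have "\<dots> = (\<Sum>p\<in>{2..n}. \<Sum>ks\<in>comps p n. C p * infsum (P p ks) (splits p \<nu>))"
          by (intro sum.cong refl infsum_cmult_right) (rule Pconv(1))
        finally show ?thesis .
      qed
      have "g k \<nu> \<le> c0 * norm X * W \<nu>"
        unfolding g_def using nk W1[of \<nu>] by (intro mult_right_mono) auto
      also have "\<dots> \<le> Gk \<nu>" unfolding Gk_def using nX c0 by (simp add: mult.assoc mult_left_mono)
      finally show ?thesis .
    qed
    have Gks: "Gk summable_on UNIV"
      and Gki: "infsum Gk UNIV = c0 * (\<Sum>p\<in>{2..n}. \<Sum>ks\<in>comps p n. C p * (\<Prod>j<p. infsum (g (ks j)) UNIV))"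
    proof -
      have in1: "(\<lambda>\<nu>. C p * infsum (P p ks) (splits p \<nu>)) summable_on UNIV
             \<and> infsum (\<lambda>\<nu>. C p * infsum (P p ks) (splits p \<nu>)) UNIV = C p * (\<Prod>j<p. infsum (g (ks j)) UNIV)"
        if "ks \<in> comps p n" for p ks
        using Pconv[OF that] by (auto intro: summable_on_cmult_right simp: infsum_cmult_right)
      have in2: "(\<lambda>\<nu>. \<Sum>ks\<in>comps p n. C p * infsum (P p ks) (splits p \<nu>)) summable_on UNIV
             \<and> infsum (\<lambda>\<nu>. \<Sum>ks\<in>comps p n. C p * infsum (P p ks) (splits p \<nu>)) UNIV
               = (\<Sum>ks\<in>comps p n. C p * (\<Prod>j<p. infsum (g (ks j)) UNIV))" for p
        using summable_sum_fin[where I="comps p n" and f="\<lambda>ks \<nu>. C p * infsum (P p ks) (splits p \<nu>)" and A=UNIV, OF finite_comps] in1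
        by auto
      have in3: "(\<lambda>\<nu>. \<Sum>p\<in>{2..n}. \<Sum>ks\<in>comps p n. C p * infsum (P p ks) (splits p \<nu>)) summable_on UNIV
             \<and> infsum (\<lambda>\<nu>. \<Sum>p\<in>{2..n}. \<Sum>ks\<in>comps p n. C p * infsum (P p ks) (splits p \<nu>)) UNIV
               = (\<Sum>p\<in>{2..n}. \<Sum>ks\<in>comps p n. C p * (\<Prod>j<p. infsum (g (ks j)) UNIV))"
        using summable_sum_fin[where I="{2..n}" and f="\<lambda>p \<nu>. \<Sum>ks\<in>comps p n. C p * infsum (P p ks) (splits p \<nu>)" and A=UNIV] in2
        by auto
      show "Gk summable_on UNIV" unfolding Gk_def using in3 by (auto intro: summable_on_cmult_right)
      show "infsum Gk UNIV = c0 * (\<Sum>p\<in>{2..n}. \<Sum>ks\<in>comps p n. C p * (\<Prod>j<p. infsum (g (ks j)) UNIV))"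
        unfolding Gk_def using in3 by (simp add: infsum_cmult_right)
    qed
    have gks: "g k summable_on UNIV"
      by (rule summable_on_comparison_test[OF Gks]) (use point g0 in auto)
    have "infsum (g k) UNIV \<le> infsum Gk UNIV"
      by (rule infsum_mono[OF gks Gks point])
    also have "\<dots> \<le> c0 * (\<Sum>p\<in>{2..n}. \<Sum>ks\<in>comps p n. C p * (\<Prod>j<p. Q * R^(ks j) / real (ks j)^2))"
      unfolding Gki
    proof (intro mult_left_mono sum_mono c0 prod_mono conjI)
      fix p ks j assume ks: "ks \<in> comps p n" and j: "j \<in> {..<p}"
      show "0 \<le> infsum (g (ks j)) UNIV" by (rule infsum_nonneg) (rule g0)
      show "infsum (g (ks j)) UNIV \<le> Q * R^(ks j) / real (ks j)^2"
        using IH ks_rng[OF ks] j by auto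
    next
      fix p ks assume "ks \<in> comps p n"
      show "0 \<le> C p" by (rule C0)
    qed
    also have "\<dots> \<le> Q * R^(Suc n) / real (Suc n)^2"
      unfolding C_def mm_def by (rule scalar_step[OF c0 _ D rho Q R y Rb n]) simp
    finally show ?thesis using gks kn by (simp add: g_def u_def W_def)
  qed
qed



lemma N1_bound:
  fixes \<Gamma> A :: "real^'m^'m" and \<omega> :: "real^'d" and f :: "int^'d \<Rightarrow> complex^'m"
    and G :: "'m \<Rightarrow> 'm list \<Rightarrow> real" and \<zeta> :: "real^'m"
  assumes Dinv1: "\<And>\<nu> y. \<nu> \<noteq> 0 \<Longrightarrow> \<bar>\<epsilon>\<bar> * norm (matrix_inv (Dmat \<Gamma> A \<epsilon> (dotZ \<omega> \<nu>)) *v y) \<le> c0 * norm y"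
    and Dinv2: "\<And>\<nu> y. \<nu> \<noteq> 0 \<Longrightarrow> \<bar>\<epsilon>\<bar> * norm (matrix_inv (Dmat \<Gamma> A \<epsilon> (dotZ \<omega> \<nu>)) *v y) \<le> \<bar>\<epsilon>\<bar> / (\<gamma> * \<bar>dotZ \<omega> \<nu>\<bar>) * norm y"
    and f_decay: "\<And>\<nu> i. cmod (f \<nu> $ i) \<le> \<Phi> * exp (- \<xi> * normZ \<nu>)"
    and xi: "\<xi> > 0" and Phi: "\<Phi> > 0" and gam: "\<gamma> > 0" and c0: "c0 \<ge> 0"
    and F: "finite F" and sig: "\<sigma> > 0" and sigle: "\<And>\<nu>. \<nu> \<in> F \<Longrightarrow> \<nu> \<noteq> 0 \<Longrightarrow> \<sigma> \<le> \<bar>dotZ \<omega> \<nu>\<bar>"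
  defines "E \<equiv> (\<lambda>\<nu>::int^'d. exp (- (\<xi>/2) * normZ \<nu>))"
  shows "(\<lambda>\<nu>. norm (useq \<Gamma> A \<omega> f G \<epsilon> \<zeta> 1 \<nu>) * exp (\<xi>/2 * normZ \<nu>)) summable_on UNIV
    \<and> infsum (\<lambda>\<nu>. norm (useq \<Gamma> A \<omega> f G \<epsilon> \<zeta> 1 \<nu>) * exp (\<xi>/2 * normZ \<nu>)) UNIV
      \<le> norm \<zeta> + \<bar>\<epsilon>\<bar> / (\<gamma> * \<sigma>) * (real CARD('m) * \<Phi>) * infsum E UNIV + c0 * (real CARD('m) * \<Phi>) * infsum E (- F)"
proof -
  define mm where "mm = real CARD('m)"
  define g1 where "g1 = (\<lambda>\<nu>. norm (useq \<Gamma> A \<omega> f G \<epsilon> \<zeta> 1 \<nu>) * exp (\<xi>/2 * normZ \<nu>))"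
  define h1 where "h1 = (\<lambda>\<nu>::int^'d. if \<nu> = 0 then norm \<zeta> else 0)"
  define h3 where "h3 = (\<lambda>\<nu>. if \<nu> \<in> F then 0 else E \<nu>)"
  define K2 where "K2 = \<bar>\<epsilon>\<bar> / (\<gamma> * \<sigma>) * (mm * \<Phi>)"
  define K3 where "K3 = c0 * (mm * \<Phi>)"
  define h where "h = (\<lambda>\<nu>. h1 \<nu> + K2 * E \<nu> + K3 * h3 \<nu>)"
  have Es: "E summable_on UNIV" unfolding E_def using lattice_summable[of "\<xi>/2"] xi by simp
  have E0: "E \<nu> \<ge> 0" for \<nu> by (simp add: E_def)
  have K2: "K2 \<ge> 0" using gam sig Phi by (simp add: K2_def mm_def)
  have K3: "K3 \<ge> 0" using c0 Phi by (simp add: K3_def mm_def)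
  have h1s: "h1 summable_on UNIV" and h1i: "infsum h1 UNIV = norm \<zeta>"
  proof -
    have "h1 summable_on UNIV \<longleftrightarrow> h1 summable_on {0}" by (rule summable_on_cong_neutral) (auto simp: h1_def)
    then show "h1 summable_on UNIV" by simp
    have "infsum h1 UNIV = infsum h1 {0}" by (rule infsum_cong_neutral) (auto simp: h1_def)
    then show "infsum h1 UNIV = norm \<zeta>" by (simp add: h1_def)
  qed
  have EF: "E summable_on (- F)" by (rule summable_on_subset_banach[OF Es]) simp
  have h3s: "h3 summable_on UNIV" and h3i: "infsum h3 UNIV = infsum E (- F)"
  proof -
    have "h3 summable_on UNIV \<longleftrightarrow> E summable_on (- F)" by (rule summable_on_cong_neutral) (auto simp: h3_def)
    then show "h3 summable_on UNIV" using EF by simp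
    show "infsum h3 UNIV = infsum E (- F)" by (rule infsum_cong_neutral) (auto simp: h3_def)
  qed
  have hs: "h summable_on UNIV" unfolding h_def
    by (intro summable_on_add summable_on_cmult_right h1s h3s Es)
  have hi: "infsum h UNIV = norm \<zeta> + K2 * infsum E UNIV + K3 * infsum E (- F)"
    unfolding h_def
    by (subst infsum_add, (intro summable_on_add summable_on_cmult_right h1s h3s Es)+,
        subst infsum_add, (intro summable_on_add summable_on_cmult_right h1s h3s Es)+)
       (simp add: infsum_cmult_right Es h3s h1i h3i)
  have point: "g1 \<nu> \<le> h \<nu>" for \<nu>
  proof (cases "\<nu> = 0")
    case True
    have "norm ((\<chi> i. complex_of_real (\<zeta>$i)) :: complex^'m) = norm \<zeta>"
      by (simp add: norm_vec_def)
    then have "g1 \<nu> = h1 \<nu>" using True by (simp add: g1_def h1_def useq_Suc[of _ _ _ _ _ _ _ 0, simplified] ustep_def)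
    then show ?thesis using K2 K3 E0[of \<nu>] by (simp add: h_def h3_def)
  next
    case nz: False
    define Di where "Di = matrix_inv (Dmat \<Gamma> A \<epsilon> (dotZ \<omega> \<nu>))"
    have u1: "useq \<Gamma> A \<omega> f G \<epsilon> \<zeta> 1 \<nu> = Di *v (complex_of_real \<epsilon> *s f \<nu>)"
      using nz by (simp add: useq_Suc[of _ _ _ _ _ _ _ 0, simplified] ustep_def Di_def)
    have nu1: "norm (useq \<Gamma> A \<omega> f G \<epsilon> \<zeta> 1 \<nu>) = \<bar>\<epsilon>\<bar> * norm (Di *v f \<nu>)"
      unfolding u1 vector_scalar_commute norm_smult_cvec by simp
    have fb: "norm (f \<nu>) * exp (\<xi>/2 * normZ \<nu>) \<le> mm * \<Phi> * E \<nu>"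
    proof -
      have "norm (f \<nu>) \<le> (\<Sum>i\<in>UNIV. cmod (f \<nu> $ i))" by (rule norm_le_sum_cvec)
      also have "\<dots> \<le> (\<Sum>i\<in>(UNIV::'m set). \<Phi> * exp (- \<xi> * normZ \<nu>))" by (rule sum_mono) (rule f_decay)
      also have "\<dots> = mm * \<Phi> * exp (- \<xi> * normZ \<nu>)" by (simp add: mm_def)
      finally have "norm (f \<nu>) * exp (\<xi>/2 * normZ \<nu>) \<le> mm * \<Phi> * exp (- \<xi> * normZ \<nu>) * exp (\<xi>/2 * normZ \<nu>)"
        by (rule mult_right_mono) simp
      also have "\<dots> = mm * \<Phi> * E \<nu>"
        by (simp add: E_def mult.assoc exp_add[symmetric])
      finally show ?thesis .
    qed
    have fn0: "0 \<le> norm (f \<nu>) * exp (\<xi>/2 * normZ \<nu>)" by simp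
    show ?thesis
    proof (cases "\<nu> \<in> F")
      case True
      have s: "\<sigma> \<le> \<bar>dotZ \<omega> \<nu>\<bar>" using sigle[OF True nz] .
      have "g1 \<nu> \<le> \<bar>\<epsilon>\<bar> / (\<gamma> * \<bar>dotZ \<omega> \<nu>\<bar>) * norm (f \<nu>) * exp (\<xi>/2 * normZ \<nu>)"
        unfolding g1_def nu1 using Dinv2[OF nz, of "f \<nu>"] by (intro mult_right_mono) (auto simp: Di_def)
      also have "\<dots> \<le> \<bar>\<epsilon>\<bar> / (\<gamma> * \<sigma>) * (norm (f \<nu>) * exp (\<xi>/2 * normZ \<nu>))"
        unfolding mult.assoc using s sig gam fn0
        by (intro mult_right_mono divide_left_mono mult_left_mono mult_pos_pos) auto
      also have "\<dots> \<le> \<bar>\<epsilon>\<bar> / (\<gamma> * \<sigma>) * (mm * \<Phi> * E \<nu>)"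
        using sig gam by (intro mult_left_mono fb) auto
      also have "\<dots> = K2 * E \<nu>" by (simp add: K2_def)
      also have "\<dots> \<le> h \<nu>" using nz True by (simp add: h_def h1_def h3_def)
      finally show ?thesis .
    next
      case False
      have "g1 \<nu> \<le> c0 * norm (f \<nu>) * exp (\<xi>/2 * normZ \<nu>)"
        unfolding g1_def nu1 using Dinv1[OF nz, of "f \<nu>"] by (intro mult_right_mono) (auto simp: Di_def)
      also have "\<dots> \<le> c0 * (mm * \<Phi> * E \<nu>)" unfolding mult.assoc using c0 fb by (intro mult_left_mono) auto
      also have "\<dots> = K3 * h3 \<nu>" using False by (simp add: K3_def h3_def)
      also have "\<dots> \<le> h \<nu>" using nz K2 E0[of \<nu>] by (simp add: h_def h1_def)
      finally show ?thesis .
    qed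
  qed
  have g1s: "g1 summable_on UNIV"
    by (rule summable_on_comparison_test[OF hs]) (use point in \<open>auto simp: g1_def\<close>)
  have "infsum g1 UNIV \<le> infsum h UNIV" by (rule infsum_mono[OF g1s hs point])
  then show ?thesis using g1s hi by (simp add: g1_def K2_def K3_def mm_def)
qed



theorem lemma4p1:
  fixes \<Gamma> A :: "real^'m::finite^'m"
    and \<omega> :: "real^'d::finite"
    and f :: "int^'d \<Rightarrow> complex^'m"
    and G :: "'m \<Rightarrow> 'm list \<Rightarrow> real"
    and \<xi> \<Phi> \<rho> \<Delta> :: real
  assumes omega_indep: "\<And>\<nu>. \<nu> \<noteq> 0 \<Longrightarrow> dotZ \<omega> \<nu> \<noteq> 0"
    and Gamma_pd: "pos_def_mat \<Gamma>"
    and f_real: "\<And>\<nu> i. f (-\<nu>) $ i = cnj (f \<nu> $ i)"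
    and f_decay: "\<And>\<nu> i. cmod (f \<nu> $ i) \<le> \<Phi> * exp (- \<xi> * normZ \<nu>)"
    and xi_pos: "\<xi> > 0" and Phi_pos: "\<Phi> > 0"
    and G_sym: "\<And>i xs ys. mset xs = mset ys \<Longrightarrow> G i xs = G i ys"
    and G_grad: "\<And>i j xs. G i (j # xs) = G j (i # xs)"
    and G0: "\<And>i. complex_of_real (G i []) = f 0 $ i"
    and A_def: "\<And>i j. A $ i $ j = G i [j]"
    and A_pd: "pos_def_mat A"
    and G_bound: "\<And>i xs. \<bar>G i xs\<bar> \<le> \<Delta> * \<rho> powi (- int (length xs))"
    and rho_pos: "\<rho> > 0" and Delta_pos: "\<Delta> > 0"
  shows "let \<kappa>\<^sub>1 = min_eig (matrix_sqrt \<Gamma>);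
             b\<^sub>1 = min_eig (matrix_inv (matrix_sqrt \<Gamma>) ** A ** matrix_inv (matrix_sqrt \<Gamma>));
             C\<^sub>0 = real (CARD('m))^2 / \<rho> * Max {\<Phi>, 1, 2 * \<Delta> / (\<kappa>\<^sub>1^2 * b\<^sub>1)}
         in \<exists>K\<^sub>0 K\<^sub>1. K\<^sub>0 > 0 \<and> K\<^sub>1 > 0 \<and>
            (\<forall>B. 0 < B \<and> B < C\<^sub>0 \<longrightarrow>
               (\<exists>\<epsilon>b > 0. \<exists>\<zeta>b > 0. \<forall>\<epsilon> (\<zeta>::real^'m) k \<nu>.
                  \<bar>\<epsilon>\<bar> < \<epsilon>b \<longrightarrow> norm \<zeta> < \<zeta>b \<longrightarrow> k \<ge> 1 \<longrightarrow> \<nu> \<noteq> 0 \<longrightarrow>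
                  norm (useq \<Gamma> A \<omega> f G \<epsilon> \<zeta> k \<nu>)
                    \<le> (K\<^sub>0 * B) * (K\<^sub>1 * B) ^ k * exp (- \<xi> * normZ \<nu> / 2)))"
proof -
  have symG: "transpose \<Gamma> = \<Gamma>" using Gamma_pd by (simp add: pos_def_mat_def)
  have symA: "transpose A = A" using A_pd by (simp add: pos_def_mat_def)
  obtain \<gamma> where gam: "\<gamma> > 0" and gamb: "\<And>x. x \<bullet> (\<Gamma> *v x) \<ge> \<gamma> * norm x ^ 2"
    using posdef_lb[OF Gamma_pd] by blast
  obtain \<alpha> where alp: "\<alpha> > 0" and alpb: "\<And>x. x \<bullet> (A *v x) \<ge> \<alpha> * norm x ^ 2"
    using posdef_lb[OF A_pd] by blast
  define c0 where "c0 = max (2/\<alpha>) (1/(\<gamma> * sqrt (\<alpha>/2)))"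
  have c0: "c0 > 0" using alp by (simp add: c0_def less_max_iff_disj)
  have Gb: "\<bar>G i xs\<bar> \<le> \<Delta> / \<rho> ^ length xs" for i xs
    using G_bound[of i xs] by (simp add: power_int_minus power_int_of_nat divide_inverse)
  define mm where "mm = real CARD('m)"
  have mm: "mm \<ge> 1" by (simp add: mm_def)
  define \<kappa> where "\<kappa> = 512 * c0 * mm^3 * \<Delta> / \<rho>^2"
  have kap: "\<kappa> > 0" using c0 mm Delta_pos rho_pos by (simp add: \<kappa>_def)
  define E where "E = (\<lambda>\<nu>::int^'d. exp (- (\<xi>/2) * normZ \<nu>))"
  have Es: "E summable_on UNIV" unfolding E_def using lattice_summable[of "\<xi>/2"] xi_pos by simp
  have E0: "E \<nu> \<ge> 0" for \<nu> by (simp add: E_def)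
  define TE where "TE = infsum E UNIV"
  have TE0: "TE \<ge> 0" unfolding TE_def by (rule infsum_nonneg) (rule E0)
  have main: "\<exists>\<epsilon>b > 0. \<exists>\<zeta>b > 0. \<forall>\<epsilon> (\<zeta>::real^'m) k \<nu>.
                  \<bar>\<epsilon>\<bar> < \<epsilon>b \<longrightarrow> norm \<zeta> < \<zeta>b \<longrightarrow> k \<ge> 1 \<longrightarrow> \<nu> \<noteq> 0 \<longrightarrow>
                  norm (useq \<Gamma> A \<omega> f G \<epsilon> \<zeta> k \<nu>)
                    \<le> (1 * B) * (1 * B) ^ k * exp (- \<xi> * normZ \<nu> / 2)" if B: "B > 0" for B
  proof -
    define Q where "Q = min (min B (B/\<kappa>)) (\<rho>/(16*mm))"
    have Q: "Q > 0" using B kap rho_pos mm by (simp add: Q_def)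
    have QB: "Q \<le> B" by (simp add: Q_def)
    define R where "R = \<kappa> * Q"
    have R: "R > 0" using kap Q by (simp add: R_def)
    have RB: "R \<le> B"
    proof -
      have "Q \<le> B/\<kappa>" by (simp add: Q_def)
      then show ?thesis using kap by (simp add: R_def field_simps)
    qed
    have y: "8 * real CARD('m) * Q / \<rho> \<le> 1/2"
    proof -
      have "Q \<le> \<rho>/(16*mm)" by (simp add: Q_def)
      then show ?thesis using rho_pos mm by (simp add: mm_def field_simps)
    qed
    have Rb: "512 * c0 * real CARD('m)^3 * \<Delta> * Q / \<rho>^2 \<le> R"
      by (simp add: R_def \<kappa>_def mm_def)
    define \<tau> where "\<tau> = Q * R"
    have tau: "\<tau> > 0" using Q R by (simp add: \<tau>_def)
    define \<delta> where "\<delta> = \<tau> / (4 * (c0 * mm * \<Phi>))"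
    have del: "\<delta> > 0" using tau c0 mm Phi_pos by (simp add: \<delta>_def)
    obtain F where F: "finite F" and Fd: "dist (sum E F) (infsum E UNIV) \<le> \<delta>"
      using infsum_finite_approximation[OF Es del] by blast
    have EFc: "infsum E (- F) \<le> \<delta>"
    proof -
      have "infsum E (F \<union> - F) = infsum E F + infsum E (- F)"
        by (rule infsum_Un_disjoint) (use F Es in \<open>auto intro: summable_on_subset_banach\<close>)
      then have "TE = sum E F + infsum E (- F)" using F by (simp add: TE_def)
      then show ?thesis using Fd by (simp add: TE_def dist_real_def)
    qed
    define \<sigma> where "\<sigma> = Min (insert 1 ((\<lambda>\<nu>. \<bar>dotZ \<omega> \<nu>\<bar>) ` (F - {0})))"
    have sig: "\<sigma> > 0" unfolding \<sigma>_def using F omega_indep by (subst Min_gr_iff) auto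
    have sigle: "\<sigma> \<le> \<bar>dotZ \<omega> \<nu>\<bar>" if "\<nu> \<in> F" "\<nu> \<noteq> 0" for \<nu>
      unfolding \<sigma>_def using F that by (intro Min_le) auto
    define \<epsilon>b where "\<epsilon>b = min 1 (\<tau> * \<gamma> * \<sigma> / (4 * (mm * \<Phi>) * (TE + 1)))"
    have eb: "\<epsilon>b > 0" using tau gam sig mm Phi_pos TE0 by (simp add: \<epsilon>b_def)
    define \<zeta>b where "\<zeta>b = \<tau> / 2"
    have zb: "\<zeta>b > 0" using tau by (simp add: \<zeta>b_def)
    show ?thesis
    proof (rule exI[of _ \<epsilon>b], rule conjI[OF eb], rule exI[of _ \<zeta>b], rule conjI[OF zb], intro allI impI)
      fix \<epsilon> :: real and \<zeta> :: "real^'m" and k :: nat and \<nu> :: "int^'d"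
      assume e: "\<bar>\<epsilon>\<bar> < \<epsilon>b" and z: "norm \<zeta> < \<zeta>b" and k: "k \<ge> 1" and nz: "\<nu> \<noteq> 0"
      have e1: "\<bar>\<epsilon>\<bar> \<le> 1" using e by (simp add: \<epsilon>b_def)
      have Dinv1: "\<bar>\<epsilon>\<bar> * norm (matrix_inv (Dmat \<Gamma> A \<epsilon> (dotZ \<omega> \<mu>)) *v v) \<le> c0 * norm v" if "\<mu> \<noteq> 0" for \<mu> v
        unfolding c0_def by (rule Dinv_bound(1)[OF symG symA gam gamb alp alpb omega_indep[OF that] e1])
      have Dinv2: "\<bar>\<epsilon>\<bar> * norm (matrix_inv (Dmat \<Gamma> A \<epsilon> (dotZ \<omega> \<mu>)) *v v) \<le> \<bar>\<epsilon>\<bar> / (\<gamma> * \<bar>dotZ \<omega> \<mu>\<bar>) * norm v" if "\<mu> \<noteq> 0" for \<mu> v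
        by (rule Dinv_bound(2)[OF symG symA gam gamb alp alpb omega_indep[OF that] e1])
      have N1: "(\<lambda>\<nu>. norm (useq \<Gamma> A \<omega> f G \<epsilon> \<zeta> 1 \<nu>) * exp (\<xi>/2 * normZ \<nu>)) summable_on UNIV
        \<and> infsum (\<lambda>\<nu>. norm (useq \<Gamma> A \<omega> f G \<epsilon> \<zeta> 1 \<nu>) * exp (\<xi>/2 * normZ \<nu>)) UNIV
          \<le> norm \<zeta> + \<bar>\<epsilon>\<bar> / (\<gamma> * \<sigma>) * (real CARD('m) * \<Phi>) * infsum E UNIV + c0 * (real CARD('m) * \<Phi>) * infsum E (- F)"
        unfolding E_def
        by (rule N1_bound[OF Dinv1 Dinv2 f_decay xi_pos Phi_pos gam less_imp_le[OF c0] F sig sigle])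
      have t2: "\<bar>\<epsilon>\<bar> / (\<gamma> * \<sigma>) * (mm * \<Phi>) * TE \<le> \<tau> / 4"
      proof -
        have "\<bar>\<epsilon>\<bar> * ((mm * \<Phi>) * TE) \<le> \<epsilon>b * ((mm * \<Phi>) * (TE + 1))"
          using e TE0 mm Phi_pos by (intro mult_mono) auto
        also have "\<dots> \<le> (\<tau> * \<gamma> * \<sigma> / (4 * (mm * \<Phi>) * (TE + 1))) * ((mm * \<Phi>) * (TE + 1))"
          using TE0 mm Phi_pos by (intro mult_right_mono) (auto simp: \<epsilon>b_def)
        also have "\<dots> = \<tau> * \<gamma> * \<sigma> / 4"
        proof -
          have gen: "a / (4 * b * t) * (b * t) = a / 4" if "b > 0" "t > 0" for a b t :: real
            using that by (simp add: field_simps)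
          show ?thesis by (rule gen) (use TE0 mm Phi_pos in auto)
        qed
        finally have "\<bar>\<epsilon>\<bar> * ((mm * \<Phi>) * TE) \<le> \<tau> * \<gamma> * \<sigma> / 4" .
        then show ?thesis using gam sig by (simp add: field_simps)
      qed
      have t3: "c0 * (mm * \<Phi>) * infsum E (- F) \<le> \<tau> / 4"
      proof -
        have "c0 * (mm * \<Phi>) * infsum E (- F) \<le> c0 * (mm * \<Phi>) * \<delta>"
          using EFc c0 mm Phi_pos by (intro mult_left_mono) auto
        also have "\<dots> = \<tau> / 4" using c0 mm Phi_pos by (simp add: \<delta>_def field_simps)
        finally show ?thesis .
      qed
      have N1b: "infsum (\<lambda>\<nu>. norm (useq \<Gamma> A \<omega> f G \<epsilon> \<zeta> 1 \<nu>) * exp (\<xi>/2 * normZ \<nu>)) UNIV \<le> Q * R"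
        using N1 t2 t3 z unfolding TE_def mm_def \<zeta>b_def \<tau>_def by linarith
      have MI: "(\<lambda>\<nu>. norm (useq \<Gamma> A \<omega> f G \<epsilon> \<zeta> k \<nu>) * exp (\<xi>/2 * normZ \<nu>)) summable_on UNIV
        \<and> infsum (\<lambda>\<nu>. norm (useq \<Gamma> A \<omega> f G \<epsilon> \<zeta> k \<nu>) * exp (\<xi>/2 * normZ \<nu>)) UNIV \<le> Q * R^k / real k^2"
        by (rule main_induct[OF Dinv1 Gb _ less_imp_le[OF c0] less_imp_le[OF Delta_pos] rho_pos Q R y Rb N1[THEN conjunct1] N1b k])
           (use xi_pos in auto)
      have single: "norm (useq \<Gamma> A \<omega> f G \<epsilon> \<zeta> k \<nu>) * exp (\<xi>/2 * normZ \<nu>) \<le> Q * R^k / real k^2"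
      proof -
        have "sum (\<lambda>\<nu>. norm (useq \<Gamma> A \<omega> f G \<epsilon> \<zeta> k \<nu>) * exp (\<xi>/2 * normZ \<nu>)) {\<nu>}
            \<le> infsum (\<lambda>\<nu>. norm (useq \<Gamma> A \<omega> f G \<epsilon> \<zeta> k \<nu>) * exp (\<xi>/2 * normZ \<nu>)) UNIV"
          by (rule finite_sum_le_infsum) (use MI in auto)
        then show ?thesis using MI by simp
      qed
      have "norm (useq \<Gamma> A \<omega> f G \<epsilon> \<zeta> k \<nu>) = norm (useq \<Gamma> A \<omega> f G \<epsilon> \<zeta> k \<nu>) * exp (\<xi>/2 * normZ \<nu>) * exp (- \<xi> * normZ \<nu> / 2)"
        by (simp add: mult.assoc exp_add[symmetric])
      also have "\<dots> \<le> Q * R^k / real k^2 * exp (- \<xi> * normZ \<nu> / 2)"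
        by (intro mult_right_mono single) simp
      also have "\<dots> \<le> (1 * B) * (1 * B) ^ k * exp (- \<xi> * normZ \<nu> / 2)"
      proof (intro mult_right_mono)
        have "Q * R^k / real k^2 \<le> Q * R^k"
          using k Q R by (simp add: divide_le_eq_1 field_simps)
        also have "\<dots> \<le> B * B^k" using QB RB Q R by (intro mult_mono power_mono) auto
        finally show "Q * R^k / real k^2 \<le> (1 * B) * (1 * B) ^ k" by simp
      qed simp
      finally have fin: "norm (useq \<Gamma> A \<omega> f G \<epsilon> \<zeta> k \<nu>) \<le> (1 * B) * (1 * B) ^ k * exp (- \<xi> * normZ \<nu> / 2)" .
      then show "norm (useq \<Gamma> A \<omega> f G \<epsilon> \<zeta> k \<nu>) \<le> (1 * B) * (1 * B) ^ k * exp (- \<xi> * normZ \<nu> / 2)" by simp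
    qed
  qed
  show ?thesis unfolding Let_def
    apply (rule exI[of _ 1], rule exI[of _ 1])
    apply (intro conjI zero_less_one allI impI)
    apply (rule main)
    apply simp
    done
qed

end
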